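(* The stabilisers in $\mathfrak{gl}(7,\mathbb R)$ (under the natural action on forms) of the $3$-form $\alpha$ and of the $4$-form $\beta$ are two different subalgebras, each isomorphic to the split real form $\mathfrak g_2^*$ of the exceptional Lie algebra $\mathfrak g_2$, and their intersection is the subalgebra $\mathfrak{so}(4)$ spanned by $\varpi_1,\varpi_2,\varpi_3,\omega_1-2w^{23},\omega_2-2w^{31},\omega_3-2w^{12}$.
   Context: On $\mathbb R^7$ with basis $e_1,\dots,e_7$ and dual basis $e^1,\dots,e^7$, let $w^s=e^{4+s}$ ($s=1,2,3$), $e^{ij}=e^i\wedge e^j$ etc., $\omega_1=e^{12}-e^{34}$, $\omega_2=e^{13}-e^{42}$, $\omega_3=e^{14}-e^{23}$, $\varpi_1=e^{12}+e^{34}$, $\varpi_2=e^{13}+e^{42}$, $\varpi_3=e^{14}+e^{23}$, and $\alpha=\omega_1\wedge w^1+\omega_2\wedge w^2+\omega_3\wedge w^3-3w^{123}$, $\beta=-\omega_1\wedge w^{23}-\omega_2\wedge w^{31}-\omega_3\wedge w^{12}-3e^{1234}$. $2$-forms are regarded as elements of $\mathfrak{so}(7)\subset\mathfrak{gl}(7,\mathbb R)$ via $e^{ij}\mapsto e^i\otimes e_j-e^j\otimes e_i$ (i.e. $\omega$ acts on $v$ by $v\mapsto v\lrcorner\omega$ after identifying $T$ and $T^*$ with the standard metric). *)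

theory Defs
  imports "HOL-Analysis.Analysis"
begin

text \<open>Setting: R^7 = real^7.  The basis vector e_i (i = 1..7) is axis (idx i) 1,
  where idx i = of_nat (i - 1) :: 7 (a bijection {1..7} -> UNIV :: 7 set).
  Exterior k-forms are represented as k-linear alternating maps, i.e. functions
  taking a list of k vectors to a real number.\<close>

definition idx :: "nat \<Rightarrow> 7" where
  "idx i = of_nat (i - 1)"

text \<open>The decomposable basis form e^{i_1 ... i_k}, evaluated on vectors v_1..v_k:
  det [ e^{i_p}(v_q) ]_{p,q} (Leibniz formula).\<close>
definition ef :: "nat list \<Rightarrow> (real^7) list \<Rightarrow> real" where
  "ef I vs = (\<Sum>\<sigma> | \<sigma> permutes {..<length I}.
      of_int (sign \<sigma>) * (\<Prod>p<length I. (vs ! (\<sigma> p)) $ idx (I ! p)))"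

text \<open>alpha = omega_1 ^ w^1 + omega_2 ^ w^2 + omega_3 ^ w^3 - 3 w^{123}, expanded
  (omega_1 = e12 - e34, omega_2 = e13 - e42, omega_3 = e14 - e23, w^s = e^{4+s}).\<close>
definition alpha :: "(real^7) list \<Rightarrow> real" where
  "alpha vs = ef [1,2,5] vs - ef [3,4,5] vs
            + ef [1,3,6] vs - ef [4,2,6] vs
            + ef [1,4,7] vs - ef [2,3,7] vs
            - 3 * ef [5,6,7] vs"

text \<open>beta = - omega_1 ^ w^{23} - omega_2 ^ w^{31} - omega_3 ^ w^{12} - 3 e^{1234}, expanded.\<close>
definition beta :: "(real^7) list \<Rightarrow> real" where
  "beta vs = - (ef [1,2,6,7] vs - ef [3,4,6,7] vs)
           - (ef [1,3,7,5] vs - ef [4,2,7,5] vs)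
           - (ef [1,4,5,6] vs - ef [2,3,5,6] vs)
           - 3 * ef [1,2,3,4] vs"

definition form_act :: "real^7^7 \<Rightarrow> ((real^7) list \<Rightarrow> real) \<Rightarrow> (real^7) list \<Rightarrow> real" where
  "form_act A \<phi> vs = - (\<Sum>p<length vs. \<phi> (vs[p := A *v (vs ! p)]))"

definition stab :: "nat \<Rightarrow> ((real^7) list \<Rightarrow> real) \<Rightarrow> (real^7^7) set" where
  "stab k \<phi> = {A. \<forall>vs. length vs = k \<longrightarrow> form_act A \<phi> vs = 0}"

definition lie_br :: "'a::comm_ring_1^'n^'n \<Rightarrow> 'a^'n^'n \<Rightarrow> 'a^'n^'n" where
  "lie_br X Y = X ** Y - Y ** X"

definition lie_subalgebra :: "(real^'n^'n) set \<Rightarrow> bool" where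
  "lie_subalgebra S \<longleftrightarrow> subspace S \<and> (\<forall>X\<in>S. \<forall>Y\<in>S. lie_br X Y \<in> S)"

definition lie_iso :: "(real^'n^'n) set \<Rightarrow> (real^'m^'m) set \<Rightarrow> bool" where
  "lie_iso S T \<longleftrightarrow> (\<exists>f. linear f \<and> bij_betw f S T \<and>
      (\<forall>X\<in>S. \<forall>Y\<in>S. f (lie_br X Y) = lie_br (f X) (f Y)))"

text \<open>The split real form g_2^* of g_2, realised (following Bryant) as the stabiliser in
  gl(7,R) of the standard split G_2 3-form
  phi~ = e123 - e1(e45 + e67) - e2(e46 - e57) + e3(e47 + e56).\<close>
definition phi_split :: "(real^7) list \<Rightarrow> real" where
  "phi_split vs = ef [1,2,3] vs - ef [1,4,5] vs - ef [1,6,7] vs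
                - ef [2,4,6] vs + ef [2,5,7] vs + ef [3,4,7] vs + ef [3,5,6] vs"

definition g2_split :: "(real^7^7) set" where
  "g2_split = stab 3 phi_split"

definition so4 :: "(real^4^4) set" where
  "so4 = {A. transpose A = - A}"

text \<open>Embedding of 2-forms into so(7): omega acts on v by v |-> v \<lrcorner> omega, i.e.
  the matrix M with M_{ba} = omega(e_a, e_b); thus e^{ij} |-> e^i (x) e_j - e^j (x) e_i.\<close>
definition so_of :: "((real^7) list \<Rightarrow> real) \<Rightarrow> real^7^7" where
  "so_of \<omega> = (\<chi> b a. \<omega> [axis a 1, axis b 1])"

definition so4_gens :: "(real^7^7) set" where
  "so4_gens = {so_of (\<lambda>vs. ef [1,2] vs + ef [3,4] vs),
               so_of (\<lambda>vs. ef [1,3] vs + ef [4,2] vs),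
               so_of (\<lambda>vs. ef [1,4] vs + ef [2,3] vs),
               so_of (\<lambda>vs. ef [1,2] vs - ef [3,4] vs - 2 * ef [6,7] vs),
               so_of (\<lambda>vs. ef [1,3] vs - ef [4,2] vs - 2 * ef [7,5] vs),
               so_of (\<lambda>vs. ef [1,4] vs - ef [2,3] vs - 2 * ef [5,6] vs)}"

end

theory Submission imports Defs begin

lemma exhaust_7: fixes x :: 7 shows "x = 0 \<or> x = 1 \<or> x = 2 \<or> x = 3 \<or> x = 4 \<or> x = 5 \<or> x = 6"
proof (induct x)
  case (of_int z)
  then have "z = 0 \<or> z = 1 \<or> z = 2 \<or> z = 3 \<or> z = 4 \<or> z = 5 \<or> z = 6" by fastforce
  then show ?case by auto
qed

lemma forall_7: "(\<forall>i::7. P i) \<longleftrightarrow> P 0 \<and> P 1 \<and> P 2 \<and> P 3 \<and> P 4 \<and> P 5 \<and> P 6"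
  by (metis exhaust_7)

lemma UNIV_7: "(UNIV::7 set) = {0,1,2,3,4,5,6}"
  using exhaust_7 by auto

lemma sum_7: "sum f (UNIV::7 set) = f 0 + f 1 + f 2 + f 3 + f 4 + f 5 + f 6"
  unfolding UNIV_7 by (simp add: ac_simps)

lemma mv_scale: "((c::real) *\<^sub>R (A::real^'n^'m)) *v x = c *\<^sub>R (A *v x)"
  by (simp add: vec_eq_iff matrix_vector_mult_def sum_distrib_left algebra_simps)

definition ml :: "nat \<Rightarrow> ((real^7) list \<Rightarrow> real) \<Rightarrow> bool" where
  "ml k \<phi> \<longleftrightarrow> (\<forall>vs p x y. length vs = k \<longrightarrow> p < k \<longrightarrow>
        \<phi> (vs[p := x + y]) = \<phi> (vs[p := x]) + \<phi> (vs[p := y])) \<and>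
     (\<forall>vs p c x. length vs = k \<longrightarrow> p < k \<longrightarrow> \<phi> (vs[p := c *\<^sub>R x]) = c * \<phi> (vs[p := x]))"

lemma ml_add: "ml k \<phi> \<Longrightarrow> length vs = k \<Longrightarrow> p < k \<Longrightarrow>
    \<phi> (vs[p := x + y]) = \<phi> (vs[p := x]) + \<phi> (vs[p := y])"
  unfolding ml_def by blast

lemma ml_scale: "ml k \<phi> \<Longrightarrow> length vs = k \<Longrightarrow> p < k \<Longrightarrow>
    \<phi> (vs[p := c *\<^sub>R x]) = c * \<phi> (vs[p := x])"
  unfolding ml_def by blast

lemma ml_diff: assumes "ml k \<phi>" "length vs = k" "p < k"
  shows "\<phi> (vs[p := x - y]) = \<phi> (vs[p := x]) - \<phi> (vs[p := y])"
proof -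
  have "x - y = x + (-1) *\<^sub>R y" by simp
  then show ?thesis using ml_add[OF assms, of x "(-1) *\<^sub>R y"] ml_scale[OF assms, of "-1" y] by simp
qed

lemma ml_zero: assumes "ml k \<phi>" "length vs = k" "p < k"
  shows "\<phi> (vs[p := 0]) = 0"
  using ml_scale[OF assms, of 0 0] by simp

lemma stab_subspace: assumes "ml k \<phi>" shows "subspace (stab k \<phi>)"
proof -
  have z: "form_act 0 \<phi> vs = 0" if l: "length vs = k" for vs
    unfolding form_act_def using ml_zero[OF assms l] l by simp
  have a: "form_act (A + B) \<phi> vs = form_act A \<phi> vs + form_act B \<phi> vs" if l: "length vs = k" for A B vs
    unfolding form_act_def using ml_add[OF assms l]
    by (simp add: matrix_vector_mult_add_rdistrib l sum.distrib)
  have m: "form_act (c *\<^sub>R A) \<phi> vs = c * form_act A \<phi> vs" if l: "length vs = k" for c A vs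
    unfolding form_act_def using ml_scale[OF assms l]
    by (simp add: mv_scale l sum_distrib_left)
  show ?thesis unfolding subspace_def stab_def using z a m by simp
qed

lemma sum_split_at:
  fixes f :: "nat \<Rightarrow> real"
  assumes "p < k"
  shows "(\<Sum>q<k. f q) = f p + (\<Sum>q<k. if q \<noteq> p then f q else 0)"
proof -
  have "(\<Sum>q<k. f q) = (\<Sum>q<k. (if q = p then f q else 0) + (if q \<noteq> p then f q else 0))"
    by (rule sum.cong) auto
  also have "\<dots> = (\<Sum>q<k. if q = p then f q else 0) + (\<Sum>q<k. if q \<noteq> p then f q else 0)"
    by (rule sum.distrib)
  also have "(\<Sum>q<k. if q = p then f q else 0) = f p"
    using assms by simp
  finally show ?thesis .
qed

lemma stab_br:
  assumes ml: "ml k \<phi>" and A: "A \<in> stab k \<phi>" and B: "B \<in> stab k \<phi>"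
  shows "lie_br A B \<in> stab k \<phi>"
proof -
  have key: "(\<Sum>p<k. \<phi> (vs[p := (X ** Y) *v (vs ! p)])) =
      - (\<Sum>p<k. \<Sum>q<k. if q \<noteq> p then \<phi> ((vs[p := Y *v (vs ! p)])[q := X *v (vs ! q)]) else 0)"
    if X: "X \<in> stab k \<phi>" and l: "length vs = k" for X Y :: "real^7^7" and vs
  proof -
    have "\<phi> (vs[p := (X ** Y) *v (vs ! p)]) =
       - (\<Sum>q<k. if q \<noteq> p then \<phi> ((vs[p := Y *v (vs ! p)])[q := X *v (vs ! q)]) else 0)"
      if p: "p < k" for p
    proof -
      let ?ws = "vs[p := Y *v (vs ! p)]"
      have lw: "length ?ws = k" using l by simp
      have "form_act X \<phi> ?ws = 0" using X lw unfolding stab_def by blast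
      then have "(\<Sum>q<k. \<phi> (?ws[q := X *v (?ws ! q)])) = 0"
        unfolding form_act_def using lw by simp
      moreover have "(\<Sum>q<k. \<phi> (?ws[q := X *v (?ws ! q)])) =
          \<phi> (?ws[p := X *v (?ws ! p)]) + (\<Sum>q<k. if q \<noteq> p then \<phi> (?ws[q := X *v (?ws ! q)]) else 0)"
        by (rule sum_split_at[OF p])
      moreover have "?ws[p := X *v (?ws ! p)] = vs[p := (X ** Y) *v (vs ! p)]"
        using p l by (simp add: matrix_vector_mul_assoc)
      moreover have "(\<Sum>q<k. if q \<noteq> p then \<phi> (?ws[q := X *v (?ws ! q)]) else 0) =
          (\<Sum>q<k. if q \<noteq> p then \<phi> ((vs[p := Y *v (vs ! p)])[q := X *v (vs ! q)]) else 0)"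
        by (rule sum.cong) auto
      ultimately show ?thesis by (smt (verit))
    qed
    note pt = this
    have "(\<Sum>p<k. \<phi> (vs[p := (X ** Y) *v (vs ! p)])) =
      (\<Sum>p<k. - (\<Sum>q<k. if q \<noteq> p then \<phi> ((vs[p := Y *v (vs ! p)])[q := X *v (vs ! q)]) else 0))"
      by (rule sum.cong[OF refl]) (simp add: pt)
    then show ?thesis by (simp add: sum_negf)
  qed
  have swap: "(\<Sum>p<k. \<Sum>q<k. if q \<noteq> p then \<phi> ((vs[p := Y *v (vs ! p)])[q := X *v (vs ! q)]) else 0)
     = (\<Sum>p<k. \<Sum>q<k. if q \<noteq> p then \<phi> ((vs[p := X *v (vs ! p)])[q := Y *v (vs ! q)]) else 0)"
    for X Y vs
  proof -
    have "(\<Sum>p<k. \<Sum>q<k. if q \<noteq> p then \<phi> ((vs[p := Y *v (vs ! p)])[q := X *v (vs ! q)]) else 0)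
       = (\<Sum>q<k. \<Sum>p<k. if q \<noteq> p then \<phi> ((vs[p := Y *v (vs ! p)])[q := X *v (vs ! q)]) else 0)"
      by (rule sum.swap)
    also have "\<dots> = (\<Sum>q<k. \<Sum>p<k. if p \<noteq> q then \<phi> ((vs[q := X *v (vs ! q)])[p := Y *v (vs ! p)]) else 0)"
      by (intro sum.cong refl) (auto simp: list_update_swap)
    finally show ?thesis .
  qed
  show ?thesis unfolding stab_def mem_Collect_eq
  proof (intro allI impI)
    fix vs :: "(real^7) list" assume l: "length vs = k"
    have "form_act (lie_br A B) \<phi> vs =
       - (\<Sum>p<k. \<phi> (vs[p := (A ** B) *v (vs ! p)]) - \<phi> (vs[p := (B ** A) *v (vs ! p)]))"
      unfolding form_act_def lie_br_def using l ml_diff[OF ml l]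
      by (simp add: matrix_vector_mult_diff_rdistrib)
    also have "\<dots> = - ((\<Sum>p<k. \<phi> (vs[p := (A ** B) *v (vs ! p)])) - (\<Sum>p<k. \<phi> (vs[p := (B ** A) *v (vs ! p)])))"
      by (simp add: sum_subtractf)
    also have "\<dots> = 0"
      using key[OF A l, where Y=B] key[OF B l, where Y=A] swap[where X=B and Y=A and vs=vs] by simp
    finally show "form_act (lie_br A B) \<phi> vs = 0" .
  qed
qed

lemma stab_lie: "ml k \<phi> \<Longrightarrow> lie_subalgebra (stab k \<phi>)"
  unfolding lie_subalgebra_def using stab_subspace stab_br by blast

lemma pullback_act:
  assumes h: "\<forall>vs. length vs = k \<longrightarrow> \<phi> vs = c * \<psi> (map ((*v) P) vs)"
    and QP: "Q ** P = mat 1" and l: "length vs = k"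
  shows "form_act A \<phi> vs = c * form_act (P ** A ** Q) \<psi> (map ((*v) P) vs)"
proof -
  have e: "(P ** A ** Q) *v (P *v x) = P *v (A *v x)" for x
    by (metis QP matrix_mul_assoc matrix_vector_mul_assoc matrix_mul_rid)
  have "form_act A \<phi> vs = - (\<Sum>p<k. c * \<psi> ((map ((*v) P) vs)[p := P *v (A *v (vs ! p))]))"
    unfolding form_act_def using h l by (simp add: map_update)
  also have "\<dots> = c * form_act (P ** A ** Q) \<psi> (map ((*v) P) vs)"
    unfolding form_act_def using l by (simp add: e sum_distrib_left)
  finally show ?thesis .
qed

lemma pullback:
  assumes h: "\<forall>vs. length vs = k \<longrightarrow> \<phi> vs = c * \<psi> (map ((*v) P) vs)"
    and c: "c \<noteq> 0" and PQ: "P ** Q = mat 1" and QP: "Q ** P = mat 1"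
  shows "stab k \<phi> = {A. P ** A ** Q \<in> stab k \<psi>}"
proof (intro set_eqI iffI; simp)
  fix A assume A: "A \<in> stab k \<phi>"
  show "P ** A ** Q \<in> stab k \<psi>" unfolding stab_def mem_Collect_eq
  proof (intro allI impI)
    fix ws :: "(real^7) list" assume l: "length ws = k"
    let ?vs = "map ((*v) Q) ws"
    have m: "map ((*v) P) ?vs = ws"
      by (simp add: map_idI matrix_vector_mul_assoc PQ)
    have "form_act A \<phi> ?vs = 0" using A l unfolding stab_def by simp
    then show "form_act (P ** A ** Q) \<psi> ws = 0"
      using pullback_act[OF h QP, of ?vs A] l m c by simp
  qed
next
  fix A assume A: "P ** A ** Q \<in> stab k \<psi>"
  show "A \<in> stab k \<phi>" unfolding stab_def mem_Collect_eq
  proof (intro allI impI)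
    fix vs :: "(real^7) list" assume l: "length vs = k"
    show "form_act A \<phi> vs = 0"
      using pullback_act[OF h QP l, of A] A l unfolding stab_def by simp
  qed
qed

lemma mm_lin: "linear (\<lambda>A::real^'n^'n. P ** A ** Q)"
  by (rule linearI) (simp_all add: vec_eq_iff
      matrix_matrix_mult_def sum_distrib_left sum_distrib_right sum.distrib algebra_simps)

lemma conj_iso:
  fixes P Q :: "real^'n^'n"
  assumes S: "S = {A. P ** A ** Q \<in> T}" and PQ: "P ** Q = mat 1" and QP: "Q ** P = mat 1"
  shows "lie_iso S (T :: (real^'n^'n) set)"
proof -
  have bij: "bij_betw (\<lambda>A. P ** A ** Q) S T"
  proof (rule bij_betw_byWitness[where f'="\<lambda>B. Q ** B ** P"])
    show "\<forall>a\<in>S. Q ** (P ** a ** Q) ** P = a"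
      by (simp add: matrix_mul_assoc QP) (simp add: matrix_mul_assoc[symmetric] QP)
    show "\<forall>a'\<in>T. P ** (Q ** a' ** P) ** Q = a'"
      by (simp add: matrix_mul_assoc PQ) (simp add: matrix_mul_assoc[symmetric] PQ)
    show "(\<lambda>A. P ** A ** Q) ` S \<subseteq> T" using S by auto
    show "(\<lambda>B. Q ** B ** P) ` T \<subseteq> S" using S
      by (auto simp: matrix_mul_assoc PQ) (simp add: matrix_mul_assoc[symmetric] PQ)
  qed
  have e: "P ** (X ** Y) ** Q = (P ** X ** Q) ** (P ** Y ** Q)" for X Y :: "real^'n^'n"
  proof -
    have "(P ** X ** Q) ** (P ** Y ** Q) = P ** X ** (Q ** P) ** Y ** Q"
      by (simp add: matrix_mul_assoc)
    then show ?thesis by (simp add: QP matrix_mul_assoc)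
  qed
  have d: "P ** (X - Y) ** Q = P ** X ** Q - P ** Y ** Q" for X Y :: "real^'n^'n"
    using linear_diff[OF mm_lin[of P Q], of X Y] by simp
  have br: "\<forall>X\<in>S. \<forall>Y\<in>S. P ** lie_br X Y ** Q = lie_br (P ** X ** Q) (P ** Y ** Q)"
    using d e by (simp add: lie_br_def)
  show ?thesis unfolding lie_iso_def using mm_lin[of P Q] bij br by blast
qed


lemma sum_perm_insert:
  assumes "finite S" "a \<notin> S"
  shows "sum f {p. p permutes insert a S} =
    (\<Sum>b\<in>insert a S. \<Sum>q\<in>{q. q permutes S}. f (Transposition.transpose a b \<circ> q))"
proof -
  let ?pF' = "{(b, p). b \<in> insert a S \<and> p \<in> {p. p permutes S}}"
  let ?g = "(\<lambda>(b, p). Transposition.transpose a b \<circ> p)"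
  have ginj: "inj_on ?g ?pF'"
  proof (rule inj_onI, clarify)
    fix b p c q
    assume pF: "p permutes S" and qF: "q permutes S"
      and eq: "Transposition.transpose a b \<circ> p = Transposition.transpose a c \<circ> q"
    from pF assms have pa: "p a = a" by (auto simp: permutes_def)
    from qF assms have qa: "q a = a" by (auto simp: permutes_def)
    have "b = (Transposition.transpose a b \<circ> p) a" using pa by simp
    also have "\<dots> = (Transposition.transpose a c \<circ> q) a" using eq by simp
    also have "\<dots> = c" using qa by simp
    finally have bc: "b = c" .
    with eq have "Transposition.transpose a b \<circ> (Transposition.transpose a b \<circ> p) = Transposition.transpose a b \<circ> (Transposition.transpose a b \<circ> q)"
      by simp
    then have "p = q" by (simp add: o_assoc)
    with bc show "b = c \<and> p = q" by simp
  qed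
  have "sum f {p. p permutes insert a S} = sum f (?g ` ?pF')"
    by (simp only: permutes_insert)
  also have "\<dots> = sum (f \<circ> ?g) ?pF'" by (rule sum.reindex[OF ginj])
  also have "?pF' = insert a S \<times> {p. p permutes S}" by auto
  also have "sum (f \<circ> ?g) (insert a S \<times> {p. p permutes S}) =
     (\<Sum>b\<in>insert a S. \<Sum>q\<in>{q. q permutes S}. f (Transposition.transpose a b \<circ> q))"
    by (simp add: sum.cartesian_product split_def comp_def)
  finally show ?thesis .
qed

lemma ef2: "ef [a,b] [u,v] = u $ idx a * v $ idx b - v $ idx a * u $ idx b"
proof -
  have e: "{..<length [a,b]} = insert 0 (insert (1::nat) {})" by auto
  show ?thesis
  unfolding ef_def e
  by (simp add: sum_perm_insert sign_compose permutation_swap_id sign_swap_id permutation_compose)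
qed

lemma ef3: "ef [a,b,c] [u,v,w] =
  u $ idx a * (v $ idx b * w $ idx c) - u $ idx a * (w $ idx b * v $ idx c) +
    (v $ idx a * (w $ idx b * u $ idx c) - v $ idx a * (u $ idx b * w $ idx c) +
     (w $ idx a * (u $ idx b * v $ idx c) - w $ idx a * (v $ idx b * u $ idx c)))"
proof -
  have e: "{..<length [a,b,c]} = insert 0 (insert 1 (insert (2::nat) {}))" by auto
  show ?thesis
  unfolding ef_def e
  by (simp add: sum_perm_insert sign_compose permutation_swap_id sign_swap_id permutation_compose)
qed

lemma ef4: "ef [a,b,c,d] [u,v,w,x] =
  u $ idx a * (v $ idx b * (w $ idx c * x $ idx d)) - u $ idx a * (v $ idx b * (x $ idx c * w $ idx d)) + (u $ idx a * (w $ idx b * (x $ idx c * v $ idx d)) - u $ idx a * (w $ idx b * (v $ idx c * x $ idx d)) + (u $ idx a * (x $ idx b * (v $ idx c * w $ idx d)) - u $ idx a * (x $ idx b * (w $ idx c * v $ idx d)))) + (v $ idx a * (u $ idx b * (x $ idx c * w $ idx d)) - v $ idx a * (u $ idx b * (w $ idx c * x $ idx d)) + (v $ idx a * (w $ idx b * (u $ idx c * x $ idx d)) - v $ idx a * (w $ idx b * (x $ idx c * u $ idx d)) + (v $ idx a * (x $ idx b * (w $ idx c * u $ idx d)) - v $ idx a * (x $ idx b * (u $ idx c * w $ idx d)))) + (w $ idx a * (v $ idx b * (x $ idx c * u $ idx d)) - w $ idx a * (v $ idx b * (u $ idx c * x $ idx d)) + (w $ idx a * (u $ idx b * (v $ idx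 c * x $ idx d)) - w $ idx a * (u $ idx b * (x $ idx c * v $ idx d)) + (w $ idx a * (x $ idx b * (u $ idx c * v $ idx d)) - w $ idx a * (x $ idx b * (v $ idx c * u $ idx d)))) + (x $ idx a * (v $ idx b * (u $ idx c * w $ idx d)) - x $ idx a * (v $ idx b * (w $ idx c * u $ idx d)) + (x $ idx a * (w $ idx b * (v $ idx c * u $ idx d)) - x $ idx a * (w $ idx b * (u $ idx c * v $ idx d)) + (x $ idx a * (u $ idx b * (w $ idx c * v $ idx d)) - x $ idx a * (u $ idx b * (v $ idx c * w $ idx d)))))))"
proof -
  have e: "{..<length [a,b,c,d]} = insert 0 (insert 1 (insert 2 (insert (3::nat) {})))" by auto
  show ?thesis
  unfolding ef_def e
  by (simp add: sum_perm_insert sign_compose permutation_swap_id sign_swap_id permutation_compose)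
qed

lemma sum_lt3: "(\<Sum>p<(3::nat). f p) = f 0 + f 1 + (f 2 :: real)"
  by (simp add: eval_nat_numeral)
lemma sum_lt4: "(\<Sum>p<(4::nat). f p) = f 0 + f 1 + f 2 + (f 3 :: real)"
  by (simp add: eval_nat_numeral)
lemma len3: "length vs = 3 \<Longrightarrow> \<exists>a b c. vs = [a,b,c]"
  by (cases vs; cases "tl vs"; cases "tl (tl vs)"; cases "tl (tl (tl vs))") auto
lemma len4: "length vs = 4 \<Longrightarrow> \<exists>a b c d. vs = [a,b,c,d]"
  by (cases vs; cases "tl vs"; cases "tl (tl vs)"; cases "tl (tl (tl vs))"; cases "tl (tl (tl (tl vs)))") auto

fun mkm :: "(7 \<times> 7 \<times> real) list \<Rightarrow> real^7^7" where
  "mkm [] = 0"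
| "mkm ((a,b,c)#L) = (\<chi> i j. if i = a \<and> j = b then c else 0) + mkm L"

declare mkm.simps[simp del]

lemma mkm_e: "mkm ((a,b,c)#L) $ i $ j = (if i = a \<and> j = b then c else 0) + mkm L $ i $ j"
  by (simp add: mkm.simps)
lemma mkm_e0: "mkm [] $ i $ j = 0" by (simp add: mkm.simps)

lemma mkm_mv: "mkm ((a,b,c)#L) *v u = (\<chi> i. if i = a then c * u$b else 0) + mkm L *v u"
proof -
  have "(\<chi> i j. if i = a \<and> j = b then c else 0) *v u = (\<chi> i. if i = a then c * u$b else 0)"
  proof -
    have "(\<Sum>j\<in>UNIV. (if i = a \<and> j = b then c else 0) * u$j) = (if i = a then c * u$b else 0)" for i
    proof -
      have "(\<Sum>j\<in>UNIV. (if i = a \<and> j = b then c else 0) * u$j) = (\<Sum>j\<in>UNIV. if j = b then (if i = a then c * u$b else 0) else 0)"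
        by (rule sum.cong) auto
      then show ?thesis by simp
    qed
    then show ?thesis by (simp add: vec_eq_iff matrix_vector_mult_def)
  qed
  moreover have "mkm ((a,b,c)#L) = (\<chi> i j. if i = a \<and> j = b then c else 0) + mkm L" by (rule mkm.simps(2))
  ultimately show ?thesis by (metis matrix_vector_mult_add_rdistrib)
qed

lemma mkm_mv0: "mkm [] *v u = 0" by (simp add: mkm.simps)
lemma idxv: "idx 1 = 0" "idx 2 = 1" "idx 3 = 2" "idx 4 = 3" "idx 5 = 4" "idx 6 = 5" "idx 7 = 6"
  by (simp_all add: idx_def)

lemma alpha3: "alpha [u,v,w] = (u$0 * v$1 * w$4) + (u$0 * v$2 * w$5) + (u$0 * v$3 * w$6) - (u$0 * v$4 * w$1) - (u$0 * v$5 * w$2) - (u$0 * v$6 * w$3) - (u$1 * v$0 * w$4) - (u$1 * v$2 * w$6) + (u$1 * v$3 * w$5) + (u$1 * v$4 * w$0) - (u$1 * v$5 * w$3) + (u$1 * v$6 * w$2) - (u$2 * v$0 * w$5) + (u$2 * v$1 * w$6) - (u$2 * v$3 * w$4) + (u$2 * v$4 * w$3) + (u$2 * v$5 * w$0) - (u$2 * v$6 * w$1) - (u$3 * v$0 * w$6) - (u$3 * v$1 * w$5) + (u$3 * v$2 * w$4) - (u$3 * v$4 * w$2) + (u$3 * v$5 * w$1) + (u$3 * v$6 * w$0) + (u$4 * v$0 * w$1) - (u$4 * v$1 * w$0) - (u$4 * v$2 * w$3) + (u$4 * v$3 * w$2) - 3 * (u$4 * v$5 * w$6) + 3 * (u$4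 * v$6 * w$5) + (u$5 * v$0 * w$2) + (u$5 * v$1 * w$3) - (u$5 * v$2 * w$0) - (u$5 * v$3 * w$1) + 3 * (u$5 * v$4 * w$6) - 3 * (u$5 * v$6 * w$4) + (u$6 * v$0 * w$3) - (u$6 * v$1 * w$2) + (u$6 * v$2 * w$1) - (u$6 * v$3 * w$0) - 3 * (u$6 * v$4 * w$5) + 3 * (u$6 * v$5 * w$4)"
  unfolding alpha_def ef3 idxv by algebra

lemma phi3: "phi_split [u,v,w] = (u$0 * v$1 * w$2) - (u$0 * v$2 * w$1) - (u$0 * v$3 * w$4) + (u$0 * v$4 * w$3) - (u$0 * v$5 * w$6) + (u$0 * v$6 * w$5) - (u$1 * v$0 * w$2) + (u$1 * v$2 * w$0) - (u$1 * v$3 * w$5) + (u$1 * v$4 * w$6) + (u$1 * v$5 * w$3) - (u$1 * v$6 * w$4) + (u$2 * v$0 * w$1) - (u$2 * v$1 * w$0) + (u$2 * v$3 * w$6) + (u$2 * v$4 * w$5) - (u$2 * v$5 * w$4) - (u$2 * v$6 * w$3) + (u$3 * v$0 * w$4) + (u$3 * v$1 * w$5) - (u$3 * v$2 * w$6) - (u$3 * v$4 * w$0) - (u$3 * v$5 * w$1) + (u$3 * v$6 * w$2) - (u$4 * v$0 * w$3) - (u$4 * v$1 * w$6) - (u$4 * v$2 * w$5) + (u$4 * v$3 * w$0) + (u$4 * v$5 * w$2) + (u$4 * v$6 * w$1) + (u$5 * v$0 * w$6) - (u$5 * v$1 * w$3) + (u$5 * v$2 * w$4) + (u$5 * v$3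 * w$1) - (u$5 * v$4 * w$2) - (u$5 * v$6 * w$0) - (u$6 * v$0 * w$5) + (u$6 * v$1 * w$4) + (u$6 * v$2 * w$3) - (u$6 * v$3 * w$2) - (u$6 * v$4 * w$1) + (u$6 * v$5 * w$0)"
  unfolding phi_split_def ef3 idxv by algebra

lemma beta4: "beta [u,v,w,x] = - 3 * (u$0 * v$1 * w$2 * x$3) + 3 * (u$0 * v$1 * w$3 * x$2) - (u$0 * v$1 * w$5 * x$6) + (u$0 * v$1 * w$6 * x$5) + 3 * (u$0 * v$2 * w$1 * x$3) - 3 * (u$0 * v$2 * w$3 * x$1) + (u$0 * v$2 * w$4 * x$6) - (u$0 * v$2 * w$6 * x$4) - 3 * (u$0 * v$3 * w$1 * x$2) + 3 * (u$0 * v$3 * w$2 * x$1) - (u$0 * v$3 * w$4 * x$5) + (u$0 * v$3 * w$5 * x$4) - (u$0 * v$4 * w$2 * x$6) + (u$0 * v$4 * w$3 * x$5) - (u$0 * v$4 * w$5 * x$3) + (u$0 * v$4 * w$6 * x$2) + (u$0 * v$5 * w$1 * x$6) - (u$0 * v$5 * w$3 * x$4) + (u$0 * v$5 * w$4 * x$3) - (u$0 * v$5 * w$6 * x$1) - (u$0 * v$6 * w$1 * x$5) + (u$0 * v$6 * w$2 * x$4) - (u$0 * v$6 * w$4 * x$2) + (u$0 * v$6 * w$5 * x$1) + 3 * (u$1 * v$0 * w$2 * x$3) - 3 * (u$1 * v$0 * w$3 * x$2) + (u$1 * v$0 * w$5 * x$6) - (u$1 * v$0 * w$6 * x$5) -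 3 * (u$1 * v$2 * w$0 * x$3) + 3 * (u$1 * v$2 * w$3 * x$0) + (u$1 * v$2 * w$4 * x$5) - (u$1 * v$2 * w$5 * x$4) + 3 * (u$1 * v$3 * w$0 * x$2) - 3 * (u$1 * v$3 * w$2 * x$0) + (u$1 * v$3 * w$4 * x$6) - (u$1 * v$3 * w$6 * x$4) - (u$1 * v$4 * w$2 * x$5) - (u$1 * v$4 * w$3 * x$6) + (u$1 * v$4 * w$5 * x$2) + (u$1 * v$4 * w$6 * x$3) - (u$1 * v$5 * w$0 * x$6) + (u$1 * v$5 * w$2 * x$4) - (u$1 * v$5 * w$4 * x$2) + (u$1 * v$5 * w$6 * x$0) + (u$1 * v$6 * w$0 * x$5) + (u$1 * v$6 * w$3 * x$4) - (u$1 * v$6 * w$4 * x$3) - (u$1 * v$6 * w$5 * x$0) - 3 * (u$2 * v$0 * w$1 * x$3) + 3 * (u$2 * v$0 * w$3 * x$1) - (u$2 * v$0 * w$4 * x$6) + (u$2 * v$0 * w$6 * x$4) + 3 * (u$2 * v$1 * w$0 * x$3) - 3 * (u$2 * v$1 * w$3 * x$0) - (u$2 * v$1 * w$4 * x$5) + (u$2 * v$1 * w$5 * x$4) - 3 * (u$2 * v$3 * w$0 * x$1) + 3 * (u$2 * v$3 * w$1 * x$0) + (u$2 * v$3 * w$5 * x$6) - (u$2 * v$3 * w$6 * x$5) + (u$2 * v$4 * w$0 * x$6) + (u$2 * v$4 * w$1 * x$5) - (u$2 * v$4 * w$5 * x$1) - (u$2 * v$4 * w$6 * x$0) - (u$2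 * v$5 * w$1 * x$4) - (u$2 * v$5 * w$3 * x$6) + (u$2 * v$5 * w$4 * x$1) + (u$2 * v$5 * w$6 * x$3) - (u$2 * v$6 * w$0 * x$4) + (u$2 * v$6 * w$3 * x$5) + (u$2 * v$6 * w$4 * x$0) - (u$2 * v$6 * w$5 * x$3) + 3 * (u$3 * v$0 * w$1 * x$2) - 3 * (u$3 * v$0 * w$2 * x$1) + (u$3 * v$0 * w$4 * x$5) - (u$3 * v$0 * w$5 * x$4) - 3 * (u$3 * v$1 * w$0 * x$2) + 3 * (u$3 * v$1 * w$2 * x$0) - (u$3 * v$1 * w$4 * x$6) + (u$3 * v$1 * w$6 * x$4) + 3 * (u$3 * v$2 * w$0 * x$1) - 3 * (u$3 * v$2 * w$1 * x$0) - (u$3 * v$2 * w$5 * x$6) + (u$3 * v$2 * w$6 * x$5) - (u$3 * v$4 * w$0 * x$5) + (u$3 * v$4 * w$1 * x$6) + (u$3 * v$4 * w$5 * x$0) - (u$3 * v$4 * w$6 * x$1) + (u$3 * v$5 * w$0 * x$4) + (u$3 * v$5 * w$2 * x$6) - (u$3 * v$5 * w$4 * x$0) - (u$3 * v$5 * w$6 * x$2) - (u$3 * v$6 * w$1 * x$4) - (u$3 * v$6 * w$2 * x$5) + (u$3 * v$6 * w$4 * x$1) + (u$3 * v$6 * w$5 * x$2) + (u$4 * v$0 * w$2 * x$6) - (u$4 * v$0 * w$3 * x$5) + (u$4 * v$0 * w$5 * x$3) - (u$4 * v$0 * w$6 * x$2) + (u$4 * v$1 * w$2 * x$5) + (u$4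 * v$1 * w$3 * x$6) - (u$4 * v$1 * w$5 * x$2) - (u$4 * v$1 * w$6 * x$3) - (u$4 * v$2 * w$0 * x$6) - (u$4 * v$2 * w$1 * x$5) + (u$4 * v$2 * w$5 * x$1) + (u$4 * v$2 * w$6 * x$0) + (u$4 * v$3 * w$0 * x$5) - (u$4 * v$3 * w$1 * x$6) - (u$4 * v$3 * w$5 * x$0) + (u$4 * v$3 * w$6 * x$1) - (u$4 * v$5 * w$0 * x$3) + (u$4 * v$5 * w$1 * x$2) - (u$4 * v$5 * w$2 * x$1) + (u$4 * v$5 * w$3 * x$0) + (u$4 * v$6 * w$0 * x$2) + (u$4 * v$6 * w$1 * x$3) - (u$4 * v$6 * w$2 * x$0) - (u$4 * v$6 * w$3 * x$1) - (u$5 * v$0 * w$1 * x$6) + (u$5 * v$0 * w$3 * x$4) - (u$5 * v$0 * w$4 * x$3) + (u$5 * v$0 * w$6 * x$1) + (u$5 * v$1 * w$0 * x$6) - (u$5 * v$1 * w$2 * x$4) + (u$5 * v$1 * w$4 * x$2) - (u$5 * v$1 * w$6 * x$0) + (u$5 * v$2 * w$1 * x$4) + (u$5 * v$2 * w$3 * x$6) - (u$5 * v$2 * w$4 * x$1) - (u$5 * v$2 * w$6 * x$3) - (u$5 * v$3 * w$0 * x$4) - (u$5 * v$3 * w$2 * x$6) + (u$5 * v$3 * w$4 * x$0) + (u$5 * v$3 * w$6 * x$2) + (u$5 * v$4 * w$0 * x$3) - (u$5 * v$4 * w$1 * x$2) + (u$5 * v$4 * w$2 * x$1) - (u$5 *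 v$4 * w$3 * x$0) - (u$5 * v$6 * w$0 * x$1) + (u$5 * v$6 * w$1 * x$0) + (u$5 * v$6 * w$2 * x$3) - (u$5 * v$6 * w$3 * x$2) + (u$6 * v$0 * w$1 * x$5) - (u$6 * v$0 * w$2 * x$4) + (u$6 * v$0 * w$4 * x$2) - (u$6 * v$0 * w$5 * x$1) - (u$6 * v$1 * w$0 * x$5) - (u$6 * v$1 * w$3 * x$4) + (u$6 * v$1 * w$4 * x$3) + (u$6 * v$1 * w$5 * x$0) + (u$6 * v$2 * w$0 * x$4) - (u$6 * v$2 * w$3 * x$5) - (u$6 * v$2 * w$4 * x$0) + (u$6 * v$2 * w$5 * x$3) + (u$6 * v$3 * w$1 * x$4) + (u$6 * v$3 * w$2 * x$5) - (u$6 * v$3 * w$4 * x$1) - (u$6 * v$3 * w$5 * x$2) - (u$6 * v$4 * w$0 * x$2) - (u$6 * v$4 * w$1 * x$3) + (u$6 * v$4 * w$2 * x$0) + (u$6 * v$4 * w$3 * x$1) + (u$6 * v$5 * w$0 * x$1) - (u$6 * v$5 * w$1 * x$0) - (u$6 * v$5 * w$2 * x$3) + (u$6 * v$5 * w$3 * x$2)"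
  unfolding beta_def ef4 idxv by algebra

lemma fa3: "form_act B \<phi> [u,v,w] = - (\<phi> [B *v u, v, w] + \<phi> [u, B *v v, w] + \<phi> [u, v, B *v w])"
  by (simp add: form_act_def sum_lt3)

lemma fa4: "form_act B \<phi> [u,v,w,x] = - (\<phi> [B *v u, v, w, x] + \<phi> [u, B *v v, w, x] + \<phi> [u, v, B *v w, x] + \<phi> [u, v, w, B *v x])"
  by (simp add: form_act_def sum_lt4)

lemma mv_axis: "((A::real^7^7) *v axis j 1) $ m = A $ m $ j"
  by (simp add: matrix_vector_mult_basis column_def)

lemma axis_c: "(axis i (1::real) :: real^7) $ j = (if j = i then 1 else 0)"
  by (simp add: axis_def)

lemma alpha_add0: "alpha [x + y, b, c] = alpha [x, b, c] + alpha [y, b, c]"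
  unfolding alpha3 vector_add_component by algebra

lemma alpha_scale0: "alpha [r *\<^sub>R x, b, c] = r * alpha [x, b, c]"
  unfolding alpha3 vector_scaleR_component real_scaleR_def by algebra

lemma alpha_add1: "alpha [a, x + y, c] = alpha [a, x, c] + alpha [a, y, c]"
  unfolding alpha3 vector_add_component by algebra

lemma alpha_scale1: "alpha [a, r *\<^sub>R x, c] = r * alpha [a, x, c]"
  unfolding alpha3 vector_scaleR_component real_scaleR_def by algebra

lemma alpha_add2: "alpha [a, b, x + y] = alpha [a, b, x] + alpha [a, b, y]"
  unfolding alpha3 vector_add_component by algebra

lemma alpha_scale2: "alpha [a, b, r *\<^sub>R x] = r * alpha [a, b, x]"
  unfolding alpha3 vector_scaleR_component real_scaleR_def by algebra

lemma ml_alpha: "ml 3 alpha"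
  unfolding ml_def
proof (intro conjI allI impI)
  fix vs :: "(real^7) list" and p :: nat and x y :: "real^7"
  assume l: "length vs = 3" and p: "p < 3"
  obtain a b c where vs: "vs = [a,b,c]" using len3[OF l] by blast
  have "p = 0 \<or> p = 1 \<or> p = 2" using p by arith
  then show "alpha (vs[p := x + y]) = alpha (vs[p := x]) + alpha (vs[p := y])"
    by (elim disjE) (simp_all add: vs alpha_add0 alpha_add1 alpha_add2)
next
  fix vs :: "(real^7) list" and p :: nat and r :: real and x :: "real^7"
  assume l: "length vs = 3" and p: "p < 3"
  obtain a b c where vs: "vs = [a,b,c]" using len3[OF l] by blast
  have "p = 0 \<or> p = 1 \<or> p = 2" using p by arith
  then show "alpha (vs[p := r *\<^sub>R x]) = r * alpha (vs[p := x])"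
    by (elim disjE) (simp_all add: vs alpha_scale0 alpha_scale1 alpha_scale2)
qed

lemma beta_add0: "beta [x + y, b, c, d] = beta [x, b, c, d] + beta [y, b, c, d]"
  unfolding beta4 vector_add_component by algebra

lemma beta_scale0: "beta [r *\<^sub>R x, b, c, d] = r * beta [x, b, c, d]"
  unfolding beta4 vector_scaleR_component real_scaleR_def by algebra

lemma beta_add1: "beta [a, x + y, c, d] = beta [a, x, c, d] + beta [a, y, c, d]"
  unfolding beta4 vector_add_component by algebra

lemma beta_scale1: "beta [a, r *\<^sub>R x, c, d] = r * beta [a, x, c, d]"
  unfolding beta4 vector_scaleR_component real_scaleR_def by algebra

lemma beta_add2: "beta [a, b, x + y, d] = beta [a, b, x, d] + beta [a, b, y, d]"
  unfolding beta4 vector_add_component by algebra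

lemma beta_scale2: "beta [a, b, r *\<^sub>R x, d] = r * beta [a, b, x, d]"
  unfolding beta4 vector_scaleR_component real_scaleR_def by algebra

lemma beta_add3: "beta [a, b, c, x + y] = beta [a, b, c, x] + beta [a, b, c, y]"
  unfolding beta4 vector_add_component by algebra

lemma beta_scale3: "beta [a, b, c, r *\<^sub>R x] = r * beta [a, b, c, x]"
  unfolding beta4 vector_scaleR_component real_scaleR_def by algebra

lemma ml_beta: "ml 4 beta"
  unfolding ml_def
proof (intro conjI allI impI)
  fix vs :: "(real^7) list" and p :: nat and x y :: "real^7"
  assume l: "length vs = 4" and p: "p < 4"
  obtain a b c d where vs: "vs = [a,b,c,d]" using len4[OF l] by blast
  have "p = 0 \<or> p = 1 \<or> p = 2 \<or> p = 3" using p by arith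
  then show "beta (vs[p := x + y]) = beta (vs[p := x]) + beta (vs[p := y])"
    by (elim disjE) (simp_all add: vs beta_add0 beta_add1 beta_add2 beta_add3)
next
  fix vs :: "(real^7) list" and p :: nat and r :: real and x :: "real^7"
  assume l: "length vs = 4" and p: "p < 4"
  obtain a b c d where vs: "vs = [a,b,c,d]" using len4[OF l] by blast
  have "p = 0 \<or> p = 1 \<or> p = 2 \<or> p = 3" using p by arith
  then show "beta (vs[p := r *\<^sub>R x]) = r * beta (vs[p := x])"
    by (elim disjE) (simp_all add: vs beta_scale0 beta_scale1 beta_scale2 beta_scale3)
qed

lemma alpha_raw:
  assumes h: "A \<in> stab 3 alpha"
  shows "- A$4$2 + A$5$1 + A$6$0 = 0"
    "- A$4$3 - A$5$0 + A$6$1 = 0"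
    "- A$0$0 - A$1$1 - A$4$4 = 0"
    "- A$2$1 + A$3$0 - A$4$5 = 0"
    "- A$2$0 - A$3$1 - A$4$6 = 0"
    "A$4$0 - A$5$3 + A$6$2 = 0"
    "- A$1$2 - A$3$0 - A$5$4 = 0"
    "- A$0$0 - A$2$2 - A$5$5 = 0"
    "A$1$0 - A$3$2 - A$5$6 = 0"
    "- A$1$3 + A$2$0 - A$6$4 = 0"
    "- A$1$0 - A$2$3 - A$6$5 = 0"
    "- A$0$0 - A$3$3 - A$6$6 = 0"
    "A$1$5 - A$2$4 + 3 * A$6$0 = 0"
    "A$1$6 - A$3$4 - 3 * A$5$0 = 0"
    "A$2$6 - A$3$5 + 3 * A$4$0 = 0"
    "A$4$1 + A$5$2 + A$6$3 = 0"
    "A$0$2 - A$3$1 + A$6$4 = 0"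
    "- A$0$1 - A$3$2 + A$6$5 = 0"
    "A$1$1 + A$2$2 + A$6$6 = 0"
    "A$0$3 + A$2$1 - A$5$4 = 0"
    "- A$1$1 - A$3$3 - A$5$5 = 0"
    "- A$0$1 + A$2$3 - A$5$6 = 0"
    "- A$0$5 - A$3$4 + 3 * A$6$1 = 0"
    "- A$0$6 + A$2$4 - 3 * A$5$1 = 0"
    "A$2$5 + A$3$6 + 3 * A$4$1 = 0"
    "A$2$2 + A$3$3 + A$4$4 = 0"
    "A$0$3 - A$1$2 + A$4$5 = 0"
    "- A$0$2 - A$1$3 + A$4$6 = 0"
    "A$0$4 - A$3$5 + 3 * A$6$2 = 0"
    "- A$1$4 - A$3$6 - 3 * A$5$2 = 0"
    "- A$0$6 - A$1$5 + 3 * A$4$2 = 0"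
    "A$1$4 + A$2$5 + 3 * A$6$3 = 0"
    "A$0$4 + A$2$6 - 3 * A$5$3 = 0"
    "A$0$5 - A$1$6 + 3 * A$4$3 = 0"
    "3 * A$4$4 + 3 * A$5$5 + 3 * A$6$6 = 0"
proof -
  have h2: "form_act A alpha vs = 0" if "length vs = 3" for vs using h that unfolding stab_def by blast
  show "- A$4$2 + A$5$1 + A$6$0 = 0" using h2[of "[axis 0 1, axis 1 1, axis 2 1]"] unfolding fa3 alpha3 by (simp add: mv_axis axis_c)
  show "- A$4$3 - A$5$0 + A$6$1 = 0" using h2[of "[axis 0 1, axis 1 1, axis 3 1]"] unfolding fa3 alpha3 by (simp add: mv_axis axis_c)
  show "- A$0$0 - A$1$1 - A$4$4 = 0" using h2[of "[axis 0 1, axis 1 1, axis 4 1]"] unfolding fa3 alpha3 by (simp add: mv_axis axis_c)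
  show "- A$2$1 + A$3$0 - A$4$5 = 0" using h2[of "[axis 0 1, axis 1 1, axis 5 1]"] unfolding fa3 alpha3 by (simp add: mv_axis axis_c)
  show "- A$2$0 - A$3$1 - A$4$6 = 0" using h2[of "[axis 0 1, axis 1 1, axis 6 1]"] unfolding fa3 alpha3 by (simp add: mv_axis axis_c)
  show "A$4$0 - A$5$3 + A$6$2 = 0" using h2[of "[axis 0 1, axis 2 1, axis 3 1]"] unfolding fa3 alpha3 by (simp add: mv_axis axis_c)
  show "- A$1$2 - A$3$0 - A$5$4 = 0" using h2[of "[axis 0 1, axis 2 1, axis 4 1]"] unfolding fa3 alpha3 by (simp add: mv_axis axis_c)
  show "- A$0$0 - A$2$2 - A$5$5 = 0" using h2[of "[axis 0 1, axis 2 1, axis 5 1]"] unfolding fa3 alpha3 by (simp add: mv_axis axis_c)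
  show "A$1$0 - A$3$2 - A$5$6 = 0" using h2[of "[axis 0 1, axis 2 1, axis 6 1]"] unfolding fa3 alpha3 by (simp add: mv_axis axis_c)
  show "- A$1$3 + A$2$0 - A$6$4 = 0" using h2[of "[axis 0 1, axis 3 1, axis 4 1]"] unfolding fa3 alpha3 by (simp add: mv_axis axis_c)
  show "- A$1$0 - A$2$3 - A$6$5 = 0" using h2[of "[axis 0 1, axis 3 1, axis 5 1]"] unfolding fa3 alpha3 by (simp add: mv_axis axis_c)
  show "- A$0$0 - A$3$3 - A$6$6 = 0" using h2[of "[axis 0 1, axis 3 1, axis 6 1]"] unfolding fa3 alpha3 by (simp add: mv_axis axis_c)
  show "A$1$5 - A$2$4 + 3 * A$6$0 = 0" using h2[of "[axis 0 1, axis 4 1, axis 5 1]"] unfolding fa3 alpha3 by (simp add: mv_axis axis_c)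
  show "A$1$6 - A$3$4 - 3 * A$5$0 = 0" using h2[of "[axis 0 1, axis 4 1, axis 6 1]"] unfolding fa3 alpha3 by (simp add: mv_axis axis_c)
  show "A$2$6 - A$3$5 + 3 * A$4$0 = 0" using h2[of "[axis 0 1, axis 5 1, axis 6 1]"] unfolding fa3 alpha3 by (simp add: mv_axis axis_c)
  show "A$4$1 + A$5$2 + A$6$3 = 0" using h2[of "[axis 1 1, axis 2 1, axis 3 1]"] unfolding fa3 alpha3 by (simp add: mv_axis axis_c)
  show "A$0$2 - A$3$1 + A$6$4 = 0" using h2[of "[axis 1 1, axis 2 1, axis 4 1]"] unfolding fa3 alpha3 by (simp add: mv_axis axis_c)
  show "- A$0$1 - A$3$2 + A$6$5 = 0" using h2[of "[axis 1 1, axis 2 1, axis 5 1]"] unfolding fa3 alpha3 by (simp add: mv_axis axis_c)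
  show "A$1$1 + A$2$2 + A$6$6 = 0" using h2[of "[axis 1 1, axis 2 1, axis 6 1]"] unfolding fa3 alpha3 by (simp add: mv_axis axis_c)
  show "A$0$3 + A$2$1 - A$5$4 = 0" using h2[of "[axis 1 1, axis 3 1, axis 4 1]"] unfolding fa3 alpha3 by (simp add: mv_axis axis_c)
  show "- A$1$1 - A$3$3 - A$5$5 = 0" using h2[of "[axis 1 1, axis 3 1, axis 5 1]"] unfolding fa3 alpha3 by (simp add: mv_axis axis_c)
  show "- A$0$1 + A$2$3 - A$5$6 = 0" using h2[of "[axis 1 1, axis 3 1, axis 6 1]"] unfolding fa3 alpha3 by (simp add: mv_axis axis_c)
  show "- A$0$5 - A$3$4 + 3 * A$6$1 = 0" using h2[of "[axis 1 1, axis 4 1, axis 5 1]"] unfolding fa3 alpha3 by (simp add: mv_axis axis_c)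
  show "- A$0$6 + A$2$4 - 3 * A$5$1 = 0" using h2[of "[axis 1 1, axis 4 1, axis 6 1]"] unfolding fa3 alpha3 by (simp add: mv_axis axis_c)
  show "A$2$5 + A$3$6 + 3 * A$4$1 = 0" using h2[of "[axis 1 1, axis 5 1, axis 6 1]"] unfolding fa3 alpha3 by (simp add: mv_axis axis_c)
  show "A$2$2 + A$3$3 + A$4$4 = 0" using h2[of "[axis 2 1, axis 3 1, axis 4 1]"] unfolding fa3 alpha3 by (simp add: mv_axis axis_c)
  show "A$0$3 - A$1$2 + A$4$5 = 0" using h2[of "[axis 2 1, axis 3 1, axis 5 1]"] unfolding fa3 alpha3 by (simp add: mv_axis axis_c)
  show "- A$0$2 - A$1$3 + A$4$6 = 0" using h2[of "[axis 2 1, axis 3 1, axis 6 1]"] unfolding fa3 alpha3 by (simp add: mv_axis axis_c)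
  show "A$0$4 - A$3$5 + 3 * A$6$2 = 0" using h2[of "[axis 2 1, axis 4 1, axis 5 1]"] unfolding fa3 alpha3 by (simp add: mv_axis axis_c)
  show "- A$1$4 - A$3$6 - 3 * A$5$2 = 0" using h2[of "[axis 2 1, axis 4 1, axis 6 1]"] unfolding fa3 alpha3 by (simp add: mv_axis axis_c)
  show "- A$0$6 - A$1$5 + 3 * A$4$2 = 0" using h2[of "[axis 2 1, axis 5 1, axis 6 1]"] unfolding fa3 alpha3 by (simp add: mv_axis axis_c)
  show "A$1$4 + A$2$5 + 3 * A$6$3 = 0" using h2[of "[axis 3 1, axis 4 1, axis 5 1]"] unfolding fa3 alpha3 by (simp add: mv_axis axis_c)
  show "A$0$4 + A$2$6 - 3 * A$5$3 = 0" using h2[of "[axis 3 1, axis 4 1, axis 6 1]"] unfolding fa3 alpha3 by (simp add: mv_axis axis_c)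
  show "A$0$5 - A$1$6 + 3 * A$4$3 = 0" using h2[of "[axis 3 1, axis 5 1, axis 6 1]"] unfolding fa3 alpha3 by (simp add: mv_axis axis_c)
  show "3 * A$4$4 + 3 * A$5$5 + 3 * A$6$6 = 0" using h2[of "[axis 4 1, axis 5 1, axis 6 1]"] unfolding fa3 alpha3 by (simp add: mv_axis axis_c)
qed

lemma beta_raw:
  assumes h: "A \<in> stab 4 beta"
  shows "3 * A$0$0 + 3 * A$1$1 + 3 * A$2$2 + 3 * A$3$3 = 0"
    "3 * A$3$4 + A$5$0 - A$6$1 = 0"
    "3 * A$3$5 - A$4$0 - A$6$2 = 0"
    "3 * A$3$6 + A$4$1 + A$5$2 = 0"
    "- 3 * A$2$4 + A$5$1 + A$6$0 = 0"
    "- 3 * A$2$5 - A$4$1 - A$6$3 = 0"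
    "- 3 * A$2$6 - A$4$0 + A$5$3 = 0"
    "A$2$0 + A$3$1 - A$6$4 = 0"
    "- A$2$1 + A$3$0 + A$5$4 = 0"
    "A$0$0 + A$1$1 + A$5$5 + A$6$6 = 0"
    "3 * A$1$4 + A$5$2 + A$6$3 = 0"
    "3 * A$1$5 - A$4$2 + A$6$0 = 0"
    "3 * A$1$6 - A$4$3 - A$5$0 = 0"
    "- A$1$0 + A$3$2 - A$6$5 = 0"
    "- A$0$0 - A$2$2 - A$4$4 - A$6$6 = 0"
    "A$1$2 + A$3$0 - A$4$5 = 0"
    "A$0$0 + A$3$3 + A$4$4 + A$5$5 = 0"
    "- A$1$0 - A$2$3 + A$5$6 = 0"
    "A$1$3 - A$2$0 - A$4$6 = 0"
    "A$1$4 + A$2$5 + A$3$6 = 0"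
    "- 3 * A$0$4 + A$5$3 - A$6$2 = 0"
    "- 3 * A$0$5 - A$4$3 + A$6$1 = 0"
    "- 3 * A$0$6 + A$4$2 - A$5$1 = 0"
    "- A$1$1 - A$2$2 - A$4$4 - A$5$5 = 0"
    "- A$0$1 - A$3$2 - A$5$6 = 0"
    "- A$0$2 + A$3$1 + A$4$6 = 0"
    "A$0$1 - A$2$3 - A$6$5 = 0"
    "- A$1$1 - A$3$3 - A$4$4 - A$6$6 = 0"
    "- A$0$3 - A$2$1 - A$4$5 = 0"
    "- A$0$4 - A$2$6 + A$3$5 = 0"
    "A$0$2 + A$1$3 + A$6$4 = 0"
    "A$0$3 - A$1$2 - A$5$4 = 0"
    "- A$2$2 - A$3$3 - A$5$5 - A$6$6 = 0"
    "- A$0$5 + A$1$6 - A$3$4 = 0"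
    "- A$0$6 - A$1$5 + A$2$4 = 0"
proof -
  have h2: "form_act A beta vs = 0" if "length vs = 4" for vs using h that unfolding stab_def by blast
  show "3 * A$0$0 + 3 * A$1$1 + 3 * A$2$2 + 3 * A$3$3 = 0" using h2[of "[axis 0 1, axis 1 1, axis 2 1, axis 3 1]"] unfolding fa4 beta4 by (simp add: mv_axis axis_c)
  show "3 * A$3$4 + A$5$0 - A$6$1 = 0" using h2[of "[axis 0 1, axis 1 1, axis 2 1, axis 4 1]"] unfolding fa4 beta4 by (simp add: mv_axis axis_c)
  show "3 * A$3$5 - A$4$0 - A$6$2 = 0" using h2[of "[axis 0 1, axis 1 1, axis 2 1, axis 5 1]"] unfolding fa4 beta4 by (simp add: mv_axis axis_c)
  show "3 * A$3$6 + A$4$1 + A$5$2 = 0" using h2[of "[axis 0 1, axis 1 1, axis 2 1, axis 6 1]"] unfolding fa4 beta4 by (simp add: mv_axis axis_c)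
  show "- 3 * A$2$4 + A$5$1 + A$6$0 = 0" using h2[of "[axis 0 1, axis 1 1, axis 3 1, axis 4 1]"] unfolding fa4 beta4 by (simp add: mv_axis axis_c)
  show "- 3 * A$2$5 - A$4$1 - A$6$3 = 0" using h2[of "[axis 0 1, axis 1 1, axis 3 1, axis 5 1]"] unfolding fa4 beta4 by (simp add: mv_axis axis_c)
  show "- 3 * A$2$6 - A$4$0 + A$5$3 = 0" using h2[of "[axis 0 1, axis 1 1, axis 3 1, axis 6 1]"] unfolding fa4 beta4 by (simp add: mv_axis axis_c)
  show "A$2$0 + A$3$1 - A$6$4 = 0" using h2[of "[axis 0 1, axis 1 1, axis 4 1, axis 5 1]"] unfolding fa4 beta4 by (simp add: mv_axis axis_c)
  show "- A$2$1 + A$3$0 + A$5$4 = 0" using h2[of "[axis 0 1, axis 1 1, axis 4 1, axis 6 1]"] unfolding fa4 beta4 by (simp add: mv_axis axis_c)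
  show "A$0$0 + A$1$1 + A$5$5 + A$6$6 = 0" using h2[of "[axis 0 1, axis 1 1, axis 5 1, axis 6 1]"] unfolding fa4 beta4 by (simp add: mv_axis axis_c)
  show "3 * A$1$4 + A$5$2 + A$6$3 = 0" using h2[of "[axis 0 1, axis 2 1, axis 3 1, axis 4 1]"] unfolding fa4 beta4 by (simp add: mv_axis axis_c)
  show "3 * A$1$5 - A$4$2 + A$6$0 = 0" using h2[of "[axis 0 1, axis 2 1, axis 3 1, axis 5 1]"] unfolding fa4 beta4 by (simp add: mv_axis axis_c)
  show "3 * A$1$6 - A$4$3 - A$5$0 = 0" using h2[of "[axis 0 1, axis 2 1, axis 3 1, axis 6 1]"] unfolding fa4 beta4 by (simp add: mv_axis axis_c)
  show "- A$1$0 + A$3$2 - A$6$5 = 0" using h2[of "[axis 0 1, axis 2 1, axis 4 1, axis 5 1]"] unfolding fa4 beta4 by (simp add: mv_axis axis_c)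
  show "- A$0$0 - A$2$2 - A$4$4 - A$6$6 = 0" using h2[of "[axis 0 1, axis 2 1, axis 4 1, axis 6 1]"] unfolding fa4 beta4 by (simp add: mv_axis axis_c)
  show "A$1$2 + A$3$0 - A$4$5 = 0" using h2[of "[axis 0 1, axis 2 1, axis 5 1, axis 6 1]"] unfolding fa4 beta4 by (simp add: mv_axis axis_c)
  show "A$0$0 + A$3$3 + A$4$4 + A$5$5 = 0" using h2[of "[axis 0 1, axis 3 1, axis 4 1, axis 5 1]"] unfolding fa4 beta4 by (simp add: mv_axis axis_c)
  show "- A$1$0 - A$2$3 + A$5$6 = 0" using h2[of "[axis 0 1, axis 3 1, axis 4 1, axis 6 1]"] unfolding fa4 beta4 by (simp add: mv_axis axis_c)
  show "A$1$3 - A$2$0 - A$4$6 = 0" using h2[of "[axis 0 1, axis 3 1, axis 5 1, axis 6 1]"] unfolding fa4 beta4 by (simp add: mv_axis axis_c)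
  show "A$1$4 + A$2$5 + A$3$6 = 0" using h2[of "[axis 0 1, axis 4 1, axis 5 1, axis 6 1]"] unfolding fa4 beta4 by (simp add: mv_axis axis_c)
  show "- 3 * A$0$4 + A$5$3 - A$6$2 = 0" using h2[of "[axis 1 1, axis 2 1, axis 3 1, axis 4 1]"] unfolding fa4 beta4 by (simp add: mv_axis axis_c)
  show "- 3 * A$0$5 - A$4$3 + A$6$1 = 0" using h2[of "[axis 1 1, axis 2 1, axis 3 1, axis 5 1]"] unfolding fa4 beta4 by (simp add: mv_axis axis_c)
  show "- 3 * A$0$6 + A$4$2 - A$5$1 = 0" using h2[of "[axis 1 1, axis 2 1, axis 3 1, axis 6 1]"] unfolding fa4 beta4 by (simp add: mv_axis axis_c)
  show "- A$1$1 - A$2$2 - A$4$4 - A$5$5 = 0" using h2[of "[axis 1 1, axis 2 1, axis 4 1, axis 5 1]"] unfolding fa4 beta4 by (simp add: mv_axis axis_c)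
  show "- A$0$1 - A$3$2 - A$5$6 = 0" using h2[of "[axis 1 1, axis 2 1, axis 4 1, axis 6 1]"] unfolding fa4 beta4 by (simp add: mv_axis axis_c)
  show "- A$0$2 + A$3$1 + A$4$6 = 0" using h2[of "[axis 1 1, axis 2 1, axis 5 1, axis 6 1]"] unfolding fa4 beta4 by (simp add: mv_axis axis_c)
  show "A$0$1 - A$2$3 - A$6$5 = 0" using h2[of "[axis 1 1, axis 3 1, axis 4 1, axis 5 1]"] unfolding fa4 beta4 by (simp add: mv_axis axis_c)
  show "- A$1$1 - A$3$3 - A$4$4 - A$6$6 = 0" using h2[of "[axis 1 1, axis 3 1, axis 4 1, axis 6 1]"] unfolding fa4 beta4 by (simp add: mv_axis axis_c)
  show "- A$0$3 - A$2$1 - A$4$5 = 0" using h2[of "[axis 1 1, axis 3 1, axis 5 1, axis 6 1]"] unfolding fa4 beta4 by (simp add: mv_axis axis_c)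
  show "- A$0$4 - A$2$6 + A$3$5 = 0" using h2[of "[axis 1 1, axis 4 1, axis 5 1, axis 6 1]"] unfolding fa4 beta4 by (simp add: mv_axis axis_c)
  show "A$0$2 + A$1$3 + A$6$4 = 0" using h2[of "[axis 2 1, axis 3 1, axis 4 1, axis 5 1]"] unfolding fa4 beta4 by (simp add: mv_axis axis_c)
  show "A$0$3 - A$1$2 - A$5$4 = 0" using h2[of "[axis 2 1, axis 3 1, axis 4 1, axis 6 1]"] unfolding fa4 beta4 by (simp add: mv_axis axis_c)
  show "- A$2$2 - A$3$3 - A$5$5 - A$6$6 = 0" using h2[of "[axis 2 1, axis 3 1, axis 5 1, axis 6 1]"] unfolding fa4 beta4 by (simp add: mv_axis axis_c)
  show "- A$0$5 + A$1$6 - A$3$4 = 0" using h2[of "[axis 2 1, axis 4 1, axis 5 1, axis 6 1]"] unfolding fa4 beta4 by (simp add: mv_axis axis_c)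
  show "- A$0$6 - A$1$5 + A$2$4 = 0" using h2[of "[axis 3 1, axis 4 1, axis 5 1, axis 6 1]"] unfolding fa4 beta4 by (simp add: mv_axis axis_c)
qed

lemma alpha_solved:
  assumes h: "A \<in> stab 3 alpha"
  shows "A$0$0 = 0"
    "A$0$1 = - A$3$2 + A$6$5"
    "A$0$2 = A$3$1 - A$6$4"
    "A$0$3 = - A$3$0"
    "A$0$4 = 3 * A$5$3 - 3 * A$6$2"
    "A$0$5 = 3 * A$5$0"
    "A$0$6 = 3 * A$6$0"
    "A$1$0 = A$3$2 - A$6$5"
    "A$1$1 = 0"
    "A$1$2 = - A$3$0 - A$5$4"
    "A$1$3 = - A$3$1"
    "A$1$4 = - 3 * A$5$2 - 3 * A$6$3"
    "A$1$5 = 3 * A$5$1"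
    "A$1$6 = 3 * A$6$1"
    "A$2$0 = - A$3$1 + A$6$4"
    "A$2$1 = A$3$0 + A$5$4"
    "A$2$2 = 0"
    "A$2$3 = - A$3$2"
    "A$2$4 = 3 * A$5$1 + 3 * A$6$0"
    "A$2$5 = 3 * A$5$2"
    "A$2$6 = 3 * A$6$2"
    "A$3$3 = 0"
    "A$3$4 = - 3 * A$5$0 + 3 * A$6$1"
    "A$3$5 = 3 * A$5$3"
    "A$3$6 = 3 * A$6$3"
    "A$4$0 = A$5$3 - A$6$2"
    "A$4$1 = - A$5$2 - A$6$3"
    "A$4$2 = A$5$1 + A$6$0"
    "A$4$3 = - A$5$0 + A$6$1"
    "A$4$4 = 0"
    "A$4$5 = - A$5$4"
    "A$4$6 = - A$6$4"
    "A$5$5 = 0"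
    "A$5$6 = - A$6$5"
    "A$6$6 = 0"
proof -
  show "A$0$0 = 0" using alpha_raw(3)[OF h] alpha_raw(8)[OF h] alpha_raw(12)[OF h] alpha_raw(19)[OF h] alpha_raw(21)[OF h] alpha_raw(26)[OF h] alpha_raw(35)[OF h] by linarith
  show "A$0$1 = - A$3$2 + A$6$5" using alpha_raw(18)[OF h] by linarith
  show "A$0$2 = A$3$1 - A$6$4" using alpha_raw(17)[OF h] by linarith
  show "A$0$3 = - A$3$0" using alpha_raw(4)[OF h] alpha_raw(7)[OF h] alpha_raw(20)[OF h] alpha_raw(27)[OF h] by linarith
  show "A$0$4 = 3 * A$5$3 - 3 * A$6$2" using alpha_raw(6)[OF h] alpha_raw(15)[OF h] alpha_raw(29)[OF h] alpha_raw(33)[OF h] by linarith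
  show "A$0$5 = 3 * A$5$0" using alpha_raw(2)[OF h] alpha_raw(14)[OF h] alpha_raw(23)[OF h] alpha_raw(34)[OF h] by linarith
  show "A$0$6 = 3 * A$6$0" using alpha_raw(1)[OF h] alpha_raw(13)[OF h] alpha_raw(24)[OF h] alpha_raw(31)[OF h] by linarith
  show "A$1$0 = A$3$2 - A$6$5" using alpha_raw(9)[OF h] alpha_raw(11)[OF h] alpha_raw(18)[OF h] alpha_raw(22)[OF h] by linarith
  show "A$1$1 = 0" using alpha_raw(3)[OF h] alpha_raw(8)[OF h] alpha_raw(12)[OF h] alpha_raw(19)[OF h] alpha_raw(21)[OF h] alpha_raw(26)[OF h] alpha_raw(35)[OF h] by linarith
  show "A$1$2 = - A$3$0 - A$5$4" using alpha_raw(7)[OF h] by linarith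
  show "A$1$3 = - A$3$1" using alpha_raw(5)[OF h] alpha_raw(10)[OF h] alpha_raw(17)[OF h] alpha_raw(28)[OF h] by linarith
  show "A$1$4 = - 3 * A$5$2 - 3 * A$6$3" using alpha_raw(16)[OF h] alpha_raw(25)[OF h] alpha_raw(30)[OF h] alpha_raw(32)[OF h] by linarith
  show "A$1$5 = 3 * A$5$1" using alpha_raw(1)[OF h] alpha_raw(13)[OF h] alpha_raw(24)[OF h] alpha_raw(31)[OF h] by linarith
  show "A$1$6 = 3 * A$6$1" using alpha_raw(2)[OF h] alpha_raw(14)[OF h] alpha_raw(23)[OF h] alpha_raw(34)[OF h] by linarith
  show "A$2$0 = - A$3$1 + A$6$4" using alpha_raw(5)[OF h] alpha_raw(10)[OF h] alpha_raw(17)[OF h] alpha_raw(28)[OF h] by linarith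
  show "A$2$1 = A$3$0 + A$5$4" using alpha_raw(4)[OF h] alpha_raw(7)[OF h] alpha_raw(20)[OF h] alpha_raw(27)[OF h] by linarith
  show "A$2$2 = 0" using alpha_raw(3)[OF h] alpha_raw(8)[OF h] alpha_raw(12)[OF h] alpha_raw(19)[OF h] alpha_raw(21)[OF h] alpha_raw(26)[OF h] alpha_raw(35)[OF h] by linarith
  show "A$2$3 = - A$3$2" using alpha_raw(9)[OF h] alpha_raw(11)[OF h] alpha_raw(18)[OF h] alpha_raw(22)[OF h] by linarith
  show "A$2$4 = 3 * A$5$1 + 3 * A$6$0" using alpha_raw(1)[OF h] alpha_raw(13)[OF h] alpha_raw(24)[OF h] alpha_raw(31)[OF h] by linarith
  show "A$2$5 = 3 * A$5$2" using alpha_raw(16)[OF h] alpha_raw(25)[OF h] alpha_raw(30)[OF h] alpha_raw(32)[OF h] by linarith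
  show "A$2$6 = 3 * A$6$2" using alpha_raw(6)[OF h] alpha_raw(15)[OF h] alpha_raw(29)[OF h] alpha_raw(33)[OF h] by linarith
  show "A$3$3 = 0" using alpha_raw(3)[OF h] alpha_raw(8)[OF h] alpha_raw(12)[OF h] alpha_raw(19)[OF h] alpha_raw(21)[OF h] alpha_raw(26)[OF h] alpha_raw(35)[OF h] by linarith
  show "A$3$4 = - 3 * A$5$0 + 3 * A$6$1" using alpha_raw(2)[OF h] alpha_raw(14)[OF h] alpha_raw(23)[OF h] alpha_raw(34)[OF h] by linarith
  show "A$3$5 = 3 * A$5$3" using alpha_raw(6)[OF h] alpha_raw(15)[OF h] alpha_raw(29)[OF h] alpha_raw(33)[OF h] by linarith
  show "A$3$6 = 3 * A$6$3" using alpha_raw(16)[OF h] alpha_raw(25)[OF h] alpha_raw(30)[OF h] alpha_raw(32)[OF h] by linarith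
  show "A$4$0 = A$5$3 - A$6$2" using alpha_raw(6)[OF h] by linarith
  show "A$4$1 = - A$5$2 - A$6$3" using alpha_raw(16)[OF h] by linarith
  show "A$4$2 = A$5$1 + A$6$0" using alpha_raw(1)[OF h] by linarith
  show "A$4$3 = - A$5$0 + A$6$1" using alpha_raw(2)[OF h] by linarith
  show "A$4$4 = 0" using alpha_raw(3)[OF h] alpha_raw(8)[OF h] alpha_raw(12)[OF h] alpha_raw(19)[OF h] alpha_raw(21)[OF h] alpha_raw(26)[OF h] alpha_raw(35)[OF h] by linarith
  show "A$4$5 = - A$5$4" using alpha_raw(4)[OF h] alpha_raw(7)[OF h] alpha_raw(20)[OF h] alpha_raw(27)[OF h] by linarith
  show "A$4$6 = - A$6$4" using alpha_raw(5)[OF h] alpha_raw(10)[OF h] alpha_raw(17)[OF h] alpha_raw(28)[OF h] by linarith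
  show "A$5$5 = 0" using alpha_raw(3)[OF h] alpha_raw(8)[OF h] alpha_raw(12)[OF h] alpha_raw(19)[OF h] alpha_raw(21)[OF h] alpha_raw(26)[OF h] alpha_raw(35)[OF h] by linarith
  show "A$5$6 = - A$6$5" using alpha_raw(9)[OF h] alpha_raw(11)[OF h] alpha_raw(18)[OF h] alpha_raw(22)[OF h] by linarith
  show "A$6$6 = 0" using alpha_raw(3)[OF h] alpha_raw(8)[OF h] alpha_raw(12)[OF h] alpha_raw(19)[OF h] alpha_raw(21)[OF h] alpha_raw(26)[OF h] alpha_raw(35)[OF h] by linarith
qed

lemma beta_solved:
  assumes h: "A \<in> stab 4 beta"
  shows "A$0$0 = 0"
    "A$0$1 = - A$3$2 + A$6$5"
    "A$0$2 = A$3$1 - A$6$4"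
    "A$0$3 = - A$3$0"
    "A$0$4 = (1/3) * A$5$3 - (1/3) * A$6$2"
    "A$0$5 = (1/3) * A$5$0"
    "A$0$6 = (1/3) * A$6$0"
    "A$1$0 = A$3$2 - A$6$5"
    "A$1$1 = 0"
    "A$1$2 = - A$3$0 - A$5$4"
    "A$1$3 = - A$3$1"
    "A$1$4 = - (1/3) * A$5$2 - (1/3) * A$6$3"
    "A$1$5 = (1/3) * A$5$1"
    "A$1$6 = (1/3) * A$6$1"
    "A$2$0 = - A$3$1 + A$6$4"
    "A$2$1 = A$3$0 + A$5$4"
    "A$2$2 = 0"
    "A$2$3 = - A$3$2"
    "A$2$4 = (1/3) * A$5$1 + (1/3) * A$6$0"
    "A$2$5 = (1/3) * A$5$2"
    "A$2$6 = (1/3) * A$6$2"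
    "A$3$3 = 0"
    "A$3$4 = - (1/3) * A$5$0 + (1/3) * A$6$1"
    "A$3$5 = (1/3) * A$5$3"
    "A$3$6 = (1/3) * A$6$3"
    "A$4$0 = A$5$3 - A$6$2"
    "A$4$1 = - A$5$2 - A$6$3"
    "A$4$2 = A$5$1 + A$6$0"
    "A$4$3 = - A$5$0 + A$6$1"
    "A$4$4 = 0"
    "A$4$5 = - A$5$4"
    "A$4$6 = - A$6$4"
    "A$5$5 = 0"
    "A$5$6 = - A$6$5"
    "A$6$6 = 0"
proof -
  show "A$0$0 = 0" using beta_raw(1)[OF h] beta_raw(10)[OF h] beta_raw(15)[OF h] beta_raw(17)[OF h] beta_raw(24)[OF h] beta_raw(28)[OF h] beta_raw(33)[OF h] by linarith
  show "A$0$1 = - A$3$2 + A$6$5" using beta_raw(14)[OF h] beta_raw(18)[OF h] beta_raw(25)[OF h] beta_raw(27)[OF h] by linarith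
  show "A$0$2 = A$3$1 - A$6$4" using beta_raw(8)[OF h] beta_raw(19)[OF h] beta_raw(26)[OF h] beta_raw(31)[OF h] by linarith
  show "A$0$3 = - A$3$0" using beta_raw(9)[OF h] beta_raw(16)[OF h] beta_raw(29)[OF h] beta_raw(32)[OF h] by linarith
  show "A$0$4 = (1/3) * A$5$3 - (1/3) * A$6$2" using beta_raw(21)[OF h] by linarith
  show "A$0$5 = (1/3) * A$5$0" using beta_raw(2)[OF h] beta_raw(13)[OF h] beta_raw(22)[OF h] beta_raw(34)[OF h] by linarith
  show "A$0$6 = (1/3) * A$6$0" using beta_raw(5)[OF h] beta_raw(12)[OF h] beta_raw(23)[OF h] beta_raw(35)[OF h] by linarith
  show "A$1$0 = A$3$2 - A$6$5" using beta_raw(14)[OF h] by linarith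
  show "A$1$1 = 0" using beta_raw(1)[OF h] beta_raw(10)[OF h] beta_raw(15)[OF h] beta_raw(17)[OF h] beta_raw(24)[OF h] beta_raw(28)[OF h] beta_raw(33)[OF h] by linarith
  show "A$1$2 = - A$3$0 - A$5$4" using beta_raw(9)[OF h] beta_raw(16)[OF h] beta_raw(29)[OF h] beta_raw(32)[OF h] by linarith
  show "A$1$3 = - A$3$1" using beta_raw(8)[OF h] beta_raw(19)[OF h] beta_raw(26)[OF h] beta_raw(31)[OF h] by linarith
  show "A$1$4 = - (1/3) * A$5$2 - (1/3) * A$6$3" using beta_raw(11)[OF h] by linarith
  show "A$1$5 = (1/3) * A$5$1" using beta_raw(5)[OF h] beta_raw(12)[OF h] beta_raw(23)[OF h] beta_raw(35)[OF h] by linarith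
  show "A$1$6 = (1/3) * A$6$1" using beta_raw(2)[OF h] beta_raw(13)[OF h] beta_raw(22)[OF h] beta_raw(34)[OF h] by linarith
  show "A$2$0 = - A$3$1 + A$6$4" using beta_raw(8)[OF h] by linarith
  show "A$2$1 = A$3$0 + A$5$4" using beta_raw(9)[OF h] by linarith
  show "A$2$2 = 0" using beta_raw(1)[OF h] beta_raw(10)[OF h] beta_raw(15)[OF h] beta_raw(17)[OF h] beta_raw(24)[OF h] beta_raw(28)[OF h] beta_raw(33)[OF h] by linarith
  show "A$2$3 = - A$3$2" using beta_raw(14)[OF h] beta_raw(18)[OF h] beta_raw(25)[OF h] beta_raw(27)[OF h] by linarith
  show "A$2$4 = (1/3) * A$5$1 + (1/3) * A$6$0" using beta_raw(5)[OF h] by linarith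
  show "A$2$5 = (1/3) * A$5$2" using beta_raw(4)[OF h] beta_raw(6)[OF h] beta_raw(11)[OF h] beta_raw(20)[OF h] by linarith
  show "A$2$6 = (1/3) * A$6$2" using beta_raw(3)[OF h] beta_raw(7)[OF h] beta_raw(21)[OF h] beta_raw(30)[OF h] by linarith
  show "A$3$3 = 0" using beta_raw(1)[OF h] beta_raw(10)[OF h] beta_raw(15)[OF h] beta_raw(17)[OF h] beta_raw(24)[OF h] beta_raw(28)[OF h] beta_raw(33)[OF h] by linarith
  show "A$3$4 = - (1/3) * A$5$0 + (1/3) * A$6$1" using beta_raw(2)[OF h] by linarith
  show "A$3$5 = (1/3) * A$5$3" using beta_raw(3)[OF h] beta_raw(7)[OF h] beta_raw(21)[OF h] beta_raw(30)[OF h] by linarith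
  show "A$3$6 = (1/3) * A$6$3" using beta_raw(4)[OF h] beta_raw(6)[OF h] beta_raw(11)[OF h] beta_raw(20)[OF h] by linarith
  show "A$4$0 = A$5$3 - A$6$2" using beta_raw(3)[OF h] beta_raw(7)[OF h] beta_raw(21)[OF h] beta_raw(30)[OF h] by linarith
  show "A$4$1 = - A$5$2 - A$6$3" using beta_raw(4)[OF h] beta_raw(6)[OF h] beta_raw(11)[OF h] beta_raw(20)[OF h] by linarith
  show "A$4$2 = A$5$1 + A$6$0" using beta_raw(5)[OF h] beta_raw(12)[OF h] beta_raw(23)[OF h] beta_raw(35)[OF h] by linarith
  show "A$4$3 = - A$5$0 + A$6$1" using beta_raw(2)[OF h] beta_raw(13)[OF h] beta_raw(22)[OF h] beta_raw(34)[OF h] by linarith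
  show "A$4$4 = 0" using beta_raw(1)[OF h] beta_raw(10)[OF h] beta_raw(15)[OF h] beta_raw(17)[OF h] beta_raw(24)[OF h] beta_raw(28)[OF h] beta_raw(33)[OF h] by linarith
  show "A$4$5 = - A$5$4" using beta_raw(9)[OF h] beta_raw(16)[OF h] beta_raw(29)[OF h] beta_raw(32)[OF h] by linarith
  show "A$4$6 = - A$6$4" using beta_raw(8)[OF h] beta_raw(19)[OF h] beta_raw(26)[OF h] beta_raw(31)[OF h] by linarith
  show "A$5$5 = 0" using beta_raw(1)[OF h] beta_raw(10)[OF h] beta_raw(15)[OF h] beta_raw(17)[OF h] beta_raw(24)[OF h] beta_raw(28)[OF h] beta_raw(33)[OF h] by linarith
  show "A$5$6 = - A$6$5" using beta_raw(14)[OF h] beta_raw(18)[OF h] beta_raw(25)[OF h] beta_raw(27)[OF h] by linarith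
  show "A$6$6 = 0" using beta_raw(1)[OF h] beta_raw(10)[OF h] beta_raw(15)[OF h] beta_raw(17)[OF h] beta_raw(24)[OF h] beta_raw(28)[OF h] beta_raw(33)[OF h] by linarith
qed

definition Ba1 :: "real^7^7" where "Ba1 = mkm [(0,3,-1),(1,2,-1),(2,1,1),(3,0,1)]"
definition Ba2 :: "real^7^7" where "Ba2 = mkm [(0,2,1),(1,3,-1),(2,0,-1),(3,1,1)]"
definition Ba3 :: "real^7^7" where "Ba3 = mkm [(0,1,-1),(1,0,1),(2,3,-1),(3,2,1)]"
definition Ba4 :: "real^7^7" where "Ba4 = mkm [(0,5,3),(3,4,-3),(4,3,-1),(5,0,1)]"
definition Ba5 :: "real^7^7" where "Ba5 = mkm [(1,5,3),(2,4,3),(4,2,1),(5,1,1)]"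
definition Ba6 :: "real^7^7" where "Ba6 = mkm [(1,4,-3),(2,5,3),(4,1,-1),(5,2,1)]"
definition Ba7 :: "real^7^7" where "Ba7 = mkm [(0,4,3),(3,5,3),(4,0,1),(5,3,1)]"
definition Ba8 :: "real^7^7" where "Ba8 = mkm [(1,2,-1),(2,1,1),(4,5,-1),(5,4,1)]"
definition Ba9 :: "real^7^7" where "Ba9 = mkm [(0,6,3),(2,4,3),(4,2,1),(6,0,1)]"
definition Ba10 :: "real^7^7" where "Ba10 = mkm [(1,6,3),(3,4,3),(4,3,1),(6,1,1)]"
definition Ba11 :: "real^7^7" where "Ba11 = mkm [(0,4,-3),(2,6,3),(4,0,-1),(6,2,1)]"
definition Ba12 :: "real^7^7" where "Ba12 = mkm [(1,4,-3),(3,6,3),(4,1,-1),(6,3,1)]"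
definition Ba13 :: "real^7^7" where "Ba13 = mkm [(0,2,-1),(2,0,1),(4,6,-1),(6,4,1)]"
definition Ba14 :: "real^7^7" where "Ba14 = mkm [(0,1,1),(1,0,-1),(5,6,-1),(6,5,1)]"
definition SBa :: "(real^7^7) set" where "SBa = {Ba1, Ba2, Ba3, Ba4, Ba5, Ba6, Ba7, Ba8, Ba9, Ba10, Ba11, Ba12, Ba13, Ba14}"

lemmas Ba_defs = Ba1_def Ba2_def Ba3_def Ba4_def Ba5_def Ba6_def Ba7_def Ba8_def Ba9_def Ba10_def Ba11_def Ba12_def Ba13_def Ba14_def

definition Bb1 :: "real^7^7" where "Bb1 = mkm [(0,3,-1),(1,2,-1),(2,1,1),(3,0,1)]"
definition Bb2 :: "real^7^7" where "Bb2 = mkm [(0,2,1),(1,3,-1),(2,0,-1),(3,1,1)]"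
definition Bb3 :: "real^7^7" where "Bb3 = mkm [(0,1,-1),(1,0,1),(2,3,-1),(3,2,1)]"
definition Bb4 :: "real^7^7" where "Bb4 = mkm [(0,5,(1/3)),(3,4,-(1/3)),(4,3,-1),(5,0,1)]"
definition Bb5 :: "real^7^7" where "Bb5 = mkm [(1,5,(1/3)),(2,4,(1/3)),(4,2,1),(5,1,1)]"
definition Bb6 :: "real^7^7" where "Bb6 = mkm [(1,4,-(1/3)),(2,5,(1/3)),(4,1,-1),(5,2,1)]"
definition Bb7 :: "real^7^7" where "Bb7 = mkm [(0,4,(1/3)),(3,5,(1/3)),(4,0,1),(5,3,1)]"
definition Bb8 :: "real^7^7" where "Bb8 = mkm [(1,2,-1),(2,1,1),(4,5,-1),(5,4,1)]"
definition Bb9 :: "real^7^7" where "Bb9 = mkm [(0,6,(1/3)),(2,4,(1/3)),(4,2,1),(6,0,1)]"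
definition Bb10 :: "real^7^7" where "Bb10 = mkm [(1,6,(1/3)),(3,4,(1/3)),(4,3,1),(6,1,1)]"
definition Bb11 :: "real^7^7" where "Bb11 = mkm [(0,4,-(1/3)),(2,6,(1/3)),(4,0,-1),(6,2,1)]"
definition Bb12 :: "real^7^7" where "Bb12 = mkm [(1,4,-(1/3)),(3,6,(1/3)),(4,1,-1),(6,3,1)]"
definition Bb13 :: "real^7^7" where "Bb13 = mkm [(0,2,-1),(2,0,1),(4,6,-1),(6,4,1)]"
definition Bb14 :: "real^7^7" where "Bb14 = mkm [(0,1,1),(1,0,-1),(5,6,-1),(6,5,1)]"
definition SBb :: "(real^7^7) set" where "SBb = {Bb1, Bb2, Bb3, Bb4, Bb5, Bb6, Bb7, Bb8, Bb9, Bb10, Bb11, Bb12, Bb13, Bb14}"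

lemmas Bb_defs = Bb1_def Bb2_def Bb3_def Bb4_def Bb5_def Bb6_def Bb7_def Bb8_def Bb9_def Bb10_def Bb11_def Bb12_def Bb13_def Bb14_def

lemma Ba1_in: "Ba1 \<in> stab 3 alpha"
  unfolding stab_def mem_Collect_eq
proof (intro allI impI)
  fix vs :: "(real^7) list" assume l: "length vs = 3"
  obtain u v w where vs: "vs = [u,v,w]" using len3[OF l] by blast
  have c: "(Ba1 *v y)$0 = - y$3" "(Ba1 *v y)$1 = - y$2" "(Ba1 *v y)$2 = y$1" "(Ba1 *v y)$3 = y$0" "(Ba1 *v y)$4 = 0" "(Ba1 *v y)$5 = 0" "(Ba1 *v y)$6 = 0" for y
    by (simp_all add: Ba1_def mkm_mv mkm_mv0)
  show "form_act Ba1 alpha vs = 0" unfolding vs fa3 alpha3 c by algebra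
qed

lemma Ba2_in: "Ba2 \<in> stab 3 alpha"
  unfolding stab_def mem_Collect_eq
proof (intro allI impI)
  fix vs :: "(real^7) list" assume l: "length vs = 3"
  obtain u v w where vs: "vs = [u,v,w]" using len3[OF l] by blast
  have c: "(Ba2 *v y)$0 = y$2" "(Ba2 *v y)$1 = - y$3" "(Ba2 *v y)$2 = - y$0" "(Ba2 *v y)$3 = y$1" "(Ba2 *v y)$4 = 0" "(Ba2 *v y)$5 = 0" "(Ba2 *v y)$6 = 0" for y
    by (simp_all add: Ba2_def mkm_mv mkm_mv0)
  show "form_act Ba2 alpha vs = 0" unfolding vs fa3 alpha3 c by algebra
qed

lemma Ba3_in: "Ba3 \<in> stab 3 alpha"
  unfolding stab_def mem_Collect_eq
proof (intro allI impI)
  fix vs :: "(real^7) list" assume l: "length vs = 3"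
  obtain u v w where vs: "vs = [u,v,w]" using len3[OF l] by blast
  have c: "(Ba3 *v y)$0 = - y$1" "(Ba3 *v y)$1 = y$0" "(Ba3 *v y)$2 = - y$3" "(Ba3 *v y)$3 = y$2" "(Ba3 *v y)$4 = 0" "(Ba3 *v y)$5 = 0" "(Ba3 *v y)$6 = 0" for y
    by (simp_all add: Ba3_def mkm_mv mkm_mv0)
  show "form_act Ba3 alpha vs = 0" unfolding vs fa3 alpha3 c by algebra
qed

lemma Ba4_in: "Ba4 \<in> stab 3 alpha"
  unfolding stab_def mem_Collect_eq
proof (intro allI impI)
  fix vs :: "(real^7) list" assume l: "length vs = 3"
  obtain u v w where vs: "vs = [u,v,w]" using len3[OF l] by blast
  have c: "(Ba4 *v y)$0 = 3 * y$5" "(Ba4 *v y)$1 = 0" "(Ba4 *v y)$2 = 0" "(Ba4 *v y)$3 = - 3 * y$4" "(Ba4 *v y)$4 = - y$3" "(Ba4 *v y)$5 = y$0" "(Ba4 *v y)$6 = 0" for y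
    by (simp_all add: Ba4_def mkm_mv mkm_mv0)
  show "form_act Ba4 alpha vs = 0" unfolding vs fa3 alpha3 c by algebra
qed

lemma Ba5_in: "Ba5 \<in> stab 3 alpha"
  unfolding stab_def mem_Collect_eq
proof (intro allI impI)
  fix vs :: "(real^7) list" assume l: "length vs = 3"
  obtain u v w where vs: "vs = [u,v,w]" using len3[OF l] by blast
  have c: "(Ba5 *v y)$0 = 0" "(Ba5 *v y)$1 = 3 * y$5" "(Ba5 *v y)$2 = 3 * y$4" "(Ba5 *v y)$3 = 0" "(Ba5 *v y)$4 = y$2" "(Ba5 *v y)$5 = y$1" "(Ba5 *v y)$6 = 0" for y
    by (simp_all add: Ba5_def mkm_mv mkm_mv0)
  show "form_act Ba5 alpha vs = 0" unfolding vs fa3 alpha3 c by algebra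
qed

lemma Ba6_in: "Ba6 \<in> stab 3 alpha"
  unfolding stab_def mem_Collect_eq
proof (intro allI impI)
  fix vs :: "(real^7) list" assume l: "length vs = 3"
  obtain u v w where vs: "vs = [u,v,w]" using len3[OF l] by blast
  have c: "(Ba6 *v y)$0 = 0" "(Ba6 *v y)$1 = - 3 * y$4" "(Ba6 *v y)$2 = 3 * y$5" "(Ba6 *v y)$3 = 0" "(Ba6 *v y)$4 = - y$1" "(Ba6 *v y)$5 = y$2" "(Ba6 *v y)$6 = 0" for y
    by (simp_all add: Ba6_def mkm_mv mkm_mv0)
  show "form_act Ba6 alpha vs = 0" unfolding vs fa3 alpha3 c by algebra
qed

lemma Ba7_in: "Ba7 \<in> stab 3 alpha"
  unfolding stab_def mem_Collect_eq
proof (intro allI impI)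
  fix vs :: "(real^7) list" assume l: "length vs = 3"
  obtain u v w where vs: "vs = [u,v,w]" using len3[OF l] by blast
  have c: "(Ba7 *v y)$0 = 3 * y$4" "(Ba7 *v y)$1 = 0" "(Ba7 *v y)$2 = 0" "(Ba7 *v y)$3 = 3 * y$5" "(Ba7 *v y)$4 = y$0" "(Ba7 *v y)$5 = y$3" "(Ba7 *v y)$6 = 0" for y
    by (simp_all add: Ba7_def mkm_mv mkm_mv0)
  show "form_act Ba7 alpha vs = 0" unfolding vs fa3 alpha3 c by algebra
qed

lemma Ba8_in: "Ba8 \<in> stab 3 alpha"
  unfolding stab_def mem_Collect_eq
proof (intro allI impI)
  fix vs :: "(real^7) list" assume l: "length vs = 3"
  obtain u v w where vs: "vs = [u,v,w]" using len3[OF l] by blast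
  have c: "(Ba8 *v y)$0 = 0" "(Ba8 *v y)$1 = - y$2" "(Ba8 *v y)$2 = y$1" "(Ba8 *v y)$3 = 0" "(Ba8 *v y)$4 = - y$5" "(Ba8 *v y)$5 = y$4" "(Ba8 *v y)$6 = 0" for y
    by (simp_all add: Ba8_def mkm_mv mkm_mv0)
  show "form_act Ba8 alpha vs = 0" unfolding vs fa3 alpha3 c by algebra
qed

lemma Ba9_in: "Ba9 \<in> stab 3 alpha"
  unfolding stab_def mem_Collect_eq
proof (intro allI impI)
  fix vs :: "(real^7) list" assume l: "length vs = 3"
  obtain u v w where vs: "vs = [u,v,w]" using len3[OF l] by blast
  have c: "(Ba9 *v y)$0 = 3 * y$6" "(Ba9 *v y)$1 = 0" "(Ba9 *v y)$2 = 3 * y$4" "(Ba9 *v y)$3 = 0" "(Ba9 *v y)$4 = y$2" "(Ba9 *v y)$5 = 0" "(Ba9 *v y)$6 = y$0" for y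
    by (simp_all add: Ba9_def mkm_mv mkm_mv0)
  show "form_act Ba9 alpha vs = 0" unfolding vs fa3 alpha3 c by algebra
qed

lemma Ba10_in: "Ba10 \<in> stab 3 alpha"
  unfolding stab_def mem_Collect_eq
proof (intro allI impI)
  fix vs :: "(real^7) list" assume l: "length vs = 3"
  obtain u v w where vs: "vs = [u,v,w]" using len3[OF l] by blast
  have c: "(Ba10 *v y)$0 = 0" "(Ba10 *v y)$1 = 3 * y$6" "(Ba10 *v y)$2 = 0" "(Ba10 *v y)$3 = 3 * y$4" "(Ba10 *v y)$4 = y$3" "(Ba10 *v y)$5 = 0" "(Ba10 *v y)$6 = y$1" for y
    by (simp_all add: Ba10_def mkm_mv mkm_mv0)
  show "form_act Ba10 alpha vs = 0" unfolding vs fa3 alpha3 c by algebra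
qed

lemma Ba11_in: "Ba11 \<in> stab 3 alpha"
  unfolding stab_def mem_Collect_eq
proof (intro allI impI)
  fix vs :: "(real^7) list" assume l: "length vs = 3"
  obtain u v w where vs: "vs = [u,v,w]" using len3[OF l] by blast
  have c: "(Ba11 *v y)$0 = - 3 * y$4" "(Ba11 *v y)$1 = 0" "(Ba11 *v y)$2 = 3 * y$6" "(Ba11 *v y)$3 = 0" "(Ba11 *v y)$4 = - y$0" "(Ba11 *v y)$5 = 0" "(Ba11 *v y)$6 = y$2" for y
    by (simp_all add: Ba11_def mkm_mv mkm_mv0)
  show "form_act Ba11 alpha vs = 0" unfolding vs fa3 alpha3 c by algebra
qed

lemma Ba12_in: "Ba12 \<in> stab 3 alpha"
  unfolding stab_def mem_Collect_eq
proof (intro allI impI)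
  fix vs :: "(real^7) list" assume l: "length vs = 3"
  obtain u v w where vs: "vs = [u,v,w]" using len3[OF l] by blast
  have c: "(Ba12 *v y)$0 = 0" "(Ba12 *v y)$1 = - 3 * y$4" "(Ba12 *v y)$2 = 0" "(Ba12 *v y)$3 = 3 * y$6" "(Ba12 *v y)$4 = - y$1" "(Ba12 *v y)$5 = 0" "(Ba12 *v y)$6 = y$3" for y
    by (simp_all add: Ba12_def mkm_mv mkm_mv0)
  show "form_act Ba12 alpha vs = 0" unfolding vs fa3 alpha3 c by algebra
qed

lemma Ba13_in: "Ba13 \<in> stab 3 alpha"
  unfolding stab_def mem_Collect_eq
proof (intro allI impI)
  fix vs :: "(real^7) list" assume l: "length vs = 3"
  obtain u v w where vs: "vs = [u,v,w]" using len3[OF l] by blast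
  have c: "(Ba13 *v y)$0 = - y$2" "(Ba13 *v y)$1 = 0" "(Ba13 *v y)$2 = y$0" "(Ba13 *v y)$3 = 0" "(Ba13 *v y)$4 = - y$6" "(Ba13 *v y)$5 = 0" "(Ba13 *v y)$6 = y$4" for y
    by (simp_all add: Ba13_def mkm_mv mkm_mv0)
  show "form_act Ba13 alpha vs = 0" unfolding vs fa3 alpha3 c by algebra
qed

lemma Ba14_in: "Ba14 \<in> stab 3 alpha"
  unfolding stab_def mem_Collect_eq
proof (intro allI impI)
  fix vs :: "(real^7) list" assume l: "length vs = 3"
  obtain u v w where vs: "vs = [u,v,w]" using len3[OF l] by blast
  have c: "(Ba14 *v y)$0 = y$1" "(Ba14 *v y)$1 = - y$0" "(Ba14 *v y)$2 = 0" "(Ba14 *v y)$3 = 0" "(Ba14 *v y)$4 = 0" "(Ba14 *v y)$5 = - y$6" "(Ba14 *v y)$6 = y$5" for y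
    by (simp_all add: Ba14_def mkm_mv mkm_mv0)
  show "form_act Ba14 alpha vs = 0" unfolding vs fa3 alpha3 c by algebra
qed

lemma Bb1_in: "Bb1 \<in> stab 4 beta"
  unfolding stab_def mem_Collect_eq
proof (intro allI impI)
  fix vs :: "(real^7) list" assume l: "length vs = 4"
  obtain u v w x where vs: "vs = [u,v,w,x]" using len4[OF l] by blast
  have c: "(Bb1 *v y)$0 = - y$3" "(Bb1 *v y)$1 = - y$2" "(Bb1 *v y)$2 = y$1" "(Bb1 *v y)$3 = y$0" "(Bb1 *v y)$4 = 0" "(Bb1 *v y)$5 = 0" "(Bb1 *v y)$6 = 0" for y
    by (simp_all add: Bb1_def mkm_mv mkm_mv0)
  show "form_act Bb1 beta vs = 0" unfolding vs fa4 beta4 c by algebra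
qed

lemma Bb2_in: "Bb2 \<in> stab 4 beta"
  unfolding stab_def mem_Collect_eq
proof (intro allI impI)
  fix vs :: "(real^7) list" assume l: "length vs = 4"
  obtain u v w x where vs: "vs = [u,v,w,x]" using len4[OF l] by blast
  have c: "(Bb2 *v y)$0 = y$2" "(Bb2 *v y)$1 = - y$3" "(Bb2 *v y)$2 = - y$0" "(Bb2 *v y)$3 = y$1" "(Bb2 *v y)$4 = 0" "(Bb2 *v y)$5 = 0" "(Bb2 *v y)$6 = 0" for y
    by (simp_all add: Bb2_def mkm_mv mkm_mv0)
  show "form_act Bb2 beta vs = 0" unfolding vs fa4 beta4 c by algebra
qed

lemma Bb3_in: "Bb3 \<in> stab 4 beta"
  unfolding stab_def mem_Collect_eq
proof (intro allI impI)
  fix vs :: "(real^7) list" assume l: "length vs = 4"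
  obtain u v w x where vs: "vs = [u,v,w,x]" using len4[OF l] by blast
  have c: "(Bb3 *v y)$0 = - y$1" "(Bb3 *v y)$1 = y$0" "(Bb3 *v y)$2 = - y$3" "(Bb3 *v y)$3 = y$2" "(Bb3 *v y)$4 = 0" "(Bb3 *v y)$5 = 0" "(Bb3 *v y)$6 = 0" for y
    by (simp_all add: Bb3_def mkm_mv mkm_mv0)
  show "form_act Bb3 beta vs = 0" unfolding vs fa4 beta4 c by algebra
qed

lemma Bb4_in: "Bb4 \<in> stab 4 beta"
  unfolding stab_def mem_Collect_eq
proof (intro allI impI)
  fix vs :: "(real^7) list" assume l: "length vs = 4"
  obtain u v w x where vs: "vs = [u,v,w,x]" using len4[OF l] by blast
  have c: "(Bb4 *v y)$0 = (1/3) * y$5" "(Bb4 *v y)$1 = 0" "(Bb4 *v y)$2 = 0" "(Bb4 *v y)$3 = - (1/3) * y$4" "(Bb4 *v y)$4 = - y$3" "(Bb4 *v y)$5 = y$0" "(Bb4 *v y)$6 = 0" for y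
    by (simp_all add: Bb4_def mkm_mv mkm_mv0)
  show "form_act Bb4 beta vs = 0" unfolding vs fa4 beta4 c by algebra
qed

lemma Bb5_in: "Bb5 \<in> stab 4 beta"
  unfolding stab_def mem_Collect_eq
proof (intro allI impI)
  fix vs :: "(real^7) list" assume l: "length vs = 4"
  obtain u v w x where vs: "vs = [u,v,w,x]" using len4[OF l] by blast
  have c: "(Bb5 *v y)$0 = 0" "(Bb5 *v y)$1 = (1/3) * y$5" "(Bb5 *v y)$2 = (1/3) * y$4" "(Bb5 *v y)$3 = 0" "(Bb5 *v y)$4 = y$2" "(Bb5 *v y)$5 = y$1" "(Bb5 *v y)$6 = 0" for y
    by (simp_all add: Bb5_def mkm_mv mkm_mv0)
  show "form_act Bb5 beta vs = 0" unfolding vs fa4 beta4 c by algebra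
qed

lemma Bb6_in: "Bb6 \<in> stab 4 beta"
  unfolding stab_def mem_Collect_eq
proof (intro allI impI)
  fix vs :: "(real^7) list" assume l: "length vs = 4"
  obtain u v w x where vs: "vs = [u,v,w,x]" using len4[OF l] by blast
  have c: "(Bb6 *v y)$0 = 0" "(Bb6 *v y)$1 = - (1/3) * y$4" "(Bb6 *v y)$2 = (1/3) * y$5" "(Bb6 *v y)$3 = 0" "(Bb6 *v y)$4 = - y$1" "(Bb6 *v y)$5 = y$2" "(Bb6 *v y)$6 = 0" for y
    by (simp_all add: Bb6_def mkm_mv mkm_mv0)
  show "form_act Bb6 beta vs = 0" unfolding vs fa4 beta4 c by algebra
qed

lemma Bb7_in: "Bb7 \<in> stab 4 beta"
  unfolding stab_def mem_Collect_eq
proof (intro allI impI)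
  fix vs :: "(real^7) list" assume l: "length vs = 4"
  obtain u v w x where vs: "vs = [u,v,w,x]" using len4[OF l] by blast
  have c: "(Bb7 *v y)$0 = (1/3) * y$4" "(Bb7 *v y)$1 = 0" "(Bb7 *v y)$2 = 0" "(Bb7 *v y)$3 = (1/3) * y$5" "(Bb7 *v y)$4 = y$0" "(Bb7 *v y)$5 = y$3" "(Bb7 *v y)$6 = 0" for y
    by (simp_all add: Bb7_def mkm_mv mkm_mv0)
  show "form_act Bb7 beta vs = 0" unfolding vs fa4 beta4 c by algebra
qed

lemma Bb8_in: "Bb8 \<in> stab 4 beta"
  unfolding stab_def mem_Collect_eq
proof (intro allI impI)
  fix vs :: "(real^7) list" assume l: "length vs = 4"
  obtain u v w x where vs: "vs = [u,v,w,x]" using len4[OF l] by blast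
  have c: "(Bb8 *v y)$0 = 0" "(Bb8 *v y)$1 = - y$2" "(Bb8 *v y)$2 = y$1" "(Bb8 *v y)$3 = 0" "(Bb8 *v y)$4 = - y$5" "(Bb8 *v y)$5 = y$4" "(Bb8 *v y)$6 = 0" for y
    by (simp_all add: Bb8_def mkm_mv mkm_mv0)
  show "form_act Bb8 beta vs = 0" unfolding vs fa4 beta4 c by algebra
qed

lemma Bb9_in: "Bb9 \<in> stab 4 beta"
  unfolding stab_def mem_Collect_eq
proof (intro allI impI)
  fix vs :: "(real^7) list" assume l: "length vs = 4"
  obtain u v w x where vs: "vs = [u,v,w,x]" using len4[OF l] by blast
  have c: "(Bb9 *v y)$0 = (1/3) * y$6" "(Bb9 *v y)$1 = 0" "(Bb9 *v y)$2 = (1/3) * y$4" "(Bb9 *v y)$3 = 0" "(Bb9 *v y)$4 = y$2" "(Bb9 *v y)$5 = 0" "(Bb9 *v y)$6 = y$0" for y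
    by (simp_all add: Bb9_def mkm_mv mkm_mv0)
  show "form_act Bb9 beta vs = 0" unfolding vs fa4 beta4 c by algebra
qed

lemma Bb10_in: "Bb10 \<in> stab 4 beta"
  unfolding stab_def mem_Collect_eq
proof (intro allI impI)
  fix vs :: "(real^7) list" assume l: "length vs = 4"
  obtain u v w x where vs: "vs = [u,v,w,x]" using len4[OF l] by blast
  have c: "(Bb10 *v y)$0 = 0" "(Bb10 *v y)$1 = (1/3) * y$6" "(Bb10 *v y)$2 = 0" "(Bb10 *v y)$3 = (1/3) * y$4" "(Bb10 *v y)$4 = y$3" "(Bb10 *v y)$5 = 0" "(Bb10 *v y)$6 = y$1" for y
    by (simp_all add: Bb10_def mkm_mv mkm_mv0)
  show "form_act Bb10 beta vs = 0" unfolding vs fa4 beta4 c by algebra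
qed

lemma Bb11_in: "Bb11 \<in> stab 4 beta"
  unfolding stab_def mem_Collect_eq
proof (intro allI impI)
  fix vs :: "(real^7) list" assume l: "length vs = 4"
  obtain u v w x where vs: "vs = [u,v,w,x]" using len4[OF l] by blast
  have c: "(Bb11 *v y)$0 = - (1/3) * y$4" "(Bb11 *v y)$1 = 0" "(Bb11 *v y)$2 = (1/3) * y$6" "(Bb11 *v y)$3 = 0" "(Bb11 *v y)$4 = - y$0" "(Bb11 *v y)$5 = 0" "(Bb11 *v y)$6 = y$2" for y
    by (simp_all add: Bb11_def mkm_mv mkm_mv0)
  show "form_act Bb11 beta vs = 0" unfolding vs fa4 beta4 c by algebra
qed

lemma Bb12_in: "Bb12 \<in> stab 4 beta"
  unfolding stab_def mem_Collect_eq
proof (intro allI impI)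
  fix vs :: "(real^7) list" assume l: "length vs = 4"
  obtain u v w x where vs: "vs = [u,v,w,x]" using len4[OF l] by blast
  have c: "(Bb12 *v y)$0 = 0" "(Bb12 *v y)$1 = - (1/3) * y$4" "(Bb12 *v y)$2 = 0" "(Bb12 *v y)$3 = (1/3) * y$6" "(Bb12 *v y)$4 = - y$1" "(Bb12 *v y)$5 = 0" "(Bb12 *v y)$6 = y$3" for y
    by (simp_all add: Bb12_def mkm_mv mkm_mv0)
  show "form_act Bb12 beta vs = 0" unfolding vs fa4 beta4 c by algebra
qed

lemma Bb13_in: "Bb13 \<in> stab 4 beta"
  unfolding stab_def mem_Collect_eq
proof (intro allI impI)
  fix vs :: "(real^7) list" assume l: "length vs = 4"
  obtain u v w x where vs: "vs = [u,v,w,x]" using len4[OF l] by blast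
  have c: "(Bb13 *v y)$0 = - y$2" "(Bb13 *v y)$1 = 0" "(Bb13 *v y)$2 = y$0" "(Bb13 *v y)$3 = 0" "(Bb13 *v y)$4 = - y$6" "(Bb13 *v y)$5 = 0" "(Bb13 *v y)$6 = y$4" for y
    by (simp_all add: Bb13_def mkm_mv mkm_mv0)
  show "form_act Bb13 beta vs = 0" unfolding vs fa4 beta4 c by algebra
qed

lemma Bb14_in: "Bb14 \<in> stab 4 beta"
  unfolding stab_def mem_Collect_eq
proof (intro allI impI)
  fix vs :: "(real^7) list" assume l: "length vs = 4"
  obtain u v w x where vs: "vs = [u,v,w,x]" using len4[OF l] by blast
  have c: "(Bb14 *v y)$0 = y$1" "(Bb14 *v y)$1 = - y$0" "(Bb14 *v y)$2 = 0" "(Bb14 *v y)$3 = 0" "(Bb14 *v y)$4 = 0" "(Bb14 *v y)$5 = - y$6" "(Bb14 *v y)$6 = y$5" for y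
    by (simp_all add: Bb14_def mkm_mv mkm_mv0)
  show "form_act Bb14 beta vs = 0" unfolding vs fa4 beta4 c by algebra
qed

lemma stab_alpha_eq: "stab 3 alpha = span SBa"
proof
  show "stab 3 alpha \<subseteq> span SBa"
  proof
    fix A assume h: "A \<in> stab 3 alpha"
    note s = alpha_solved[OF h]
    have e: "A = A$3$0 *\<^sub>R Ba1 + A$3$1 *\<^sub>R Ba2 + A$3$2 *\<^sub>R Ba3 + A$5$0 *\<^sub>R Ba4 + A$5$1 *\<^sub>R Ba5 + A$5$2 *\<^sub>R Ba6 + A$5$3 *\<^sub>R Ba7 + A$5$4 *\<^sub>R Ba8 + A$6$0 *\<^sub>R Ba9 + A$6$1 *\<^sub>R Ba10 + A$6$2 *\<^sub>R Ba11 + A$6$3 *\<^sub>R Ba12 + A$6$4 *\<^sub>R Ba13 + A$6$5 *\<^sub>R Ba14"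
      unfolding vec_eq_iff forall_7 by (simp add: Ba_defs mkm_e mkm_e0 s)
    have "A$3$0 *\<^sub>R Ba1 + A$3$1 *\<^sub>R Ba2 + A$3$2 *\<^sub>R Ba3 + A$5$0 *\<^sub>R Ba4 + A$5$1 *\<^sub>R Ba5 + A$5$2 *\<^sub>R Ba6 + A$5$3 *\<^sub>R Ba7 + A$5$4 *\<^sub>R Ba8 + A$6$0 *\<^sub>R Ba9 + A$6$1 *\<^sub>R Ba10 + A$6$2 *\<^sub>R Ba11 + A$6$3 *\<^sub>R Ba12 + A$6$4 *\<^sub>R Ba13 + A$6$5 *\<^sub>R Ba14 \<in> span SBa"
      by (intro span_add span_scale span_base) (simp_all add: SBa_def)
    then show "A \<in> span SBa" using e by simp
  qed
  show "span SBa \<subseteq> stab 3 alpha"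
    by (rule span_minimal) (simp_all add: SBa_def Ba1_in Ba2_in Ba3_in Ba4_in Ba5_in Ba6_in Ba7_in Ba8_in Ba9_in Ba10_in Ba11_in Ba12_in Ba13_in Ba14_in stab_subspace ml_alpha)
qed

lemma stab_beta_eq: "stab 4 beta = span SBb"
proof
  show "stab 4 beta \<subseteq> span SBb"
  proof
    fix A assume h: "A \<in> stab 4 beta"
    note s = beta_solved[OF h]
    have e: "A = A$3$0 *\<^sub>R Bb1 + A$3$1 *\<^sub>R Bb2 + A$3$2 *\<^sub>R Bb3 + A$5$0 *\<^sub>R Bb4 + A$5$1 *\<^sub>R Bb5 + A$5$2 *\<^sub>R Bb6 + A$5$3 *\<^sub>R Bb7 + A$5$4 *\<^sub>R Bb8 + A$6$0 *\<^sub>R Bb9 + A$6$1 *\<^sub>R Bb10 + A$6$2 *\<^sub>R Bb11 + A$6$3 *\<^sub>R Bb12 + A$6$4 *\<^sub>R Bb13 + A$6$5 *\<^sub>R Bb14"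
      unfolding vec_eq_iff forall_7 by (simp add: Bb_defs mkm_e mkm_e0 s)
    have "A$3$0 *\<^sub>R Bb1 + A$3$1 *\<^sub>R Bb2 + A$3$2 *\<^sub>R Bb3 + A$5$0 *\<^sub>R Bb4 + A$5$1 *\<^sub>R Bb5 + A$5$2 *\<^sub>R Bb6 + A$5$3 *\<^sub>R Bb7 + A$5$4 *\<^sub>R Bb8 + A$6$0 *\<^sub>R Bb9 + A$6$1 *\<^sub>R Bb10 + A$6$2 *\<^sub>R Bb11 + A$6$3 *\<^sub>R Bb12 + A$6$4 *\<^sub>R Bb13 + A$6$5 *\<^sub>R Bb14 \<in> span SBb"
      by (intro span_add span_scale span_base) (simp_all add: SBb_def)
    then show "A \<in> span SBb" using e by simp
  qed
  show "span SBb \<subseteq> stab 4 beta"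
    by (rule span_minimal) (simp_all add: SBb_def Bb1_in Bb2_in Bb3_in Bb4_in Bb5_in Bb6_in Bb7_in Bb8_in Bb9_in Bb10_in Bb11_in Bb12_in Bb13_in Bb14_in stab_subspace ml_beta)
qed


definition dg :: "(7 \<Rightarrow> real) \<Rightarrow> real^7^7" where "dg d = (\<chi> i j. if i = j then d i else 0)"

lemma dg_l: "(dg d ** X) $ i $ j = d i * X $ i $ j"
proof -
  have "(\<Sum>k\<in>UNIV. (if i = k then d i else 0) * X $ k $ j) = (\<Sum>k\<in>UNIV. if i = k then d i * X $ i $ j else 0)"
    by (rule sum.cong) auto
  then show ?thesis by (simp add: matrix_matrix_mult_def dg_def)
qed

lemma dg_r: "(X ** dg e) $ i $ j = X $ i $ j * e j"
proof -
  have "(\<Sum>k\<in>UNIV. X $ i $ k * (if k = j then e k else 0)) = (\<Sum>k\<in>UNIV. if j = k then X $ i $ j * e j else 0)"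
    by (rule sum.cong) auto
  then show ?thesis by (simp add: matrix_matrix_mult_def dg_def)
qed

lemma dg_conj: "(dg d ** X ** dg e) $ i $ j = d i * X $ i $ j * e j"
  by (simp add: dg_l dg_r)

definition Dm :: "real^7^7" where "Dm = dg (\<lambda>i. if i = 4 \<or> i = 5 \<or> i = 6 then 1/3 else 1)"
definition Em :: "real^7^7" where "Em = dg (\<lambda>i. if i = 4 \<or> i = 5 \<or> i = 6 then 3 else 1)"

lemma DE: "Dm ** Em = mat 1"
  unfolding vec_eq_iff forall_7 Dm_def Em_def dg_l by (simp add: dg_def mat_def)

lemma ED: "Em ** Dm = mat 1"
  unfolding vec_eq_iff forall_7 Dm_def Em_def dg_l by (simp add: dg_def mat_def)

lemma conj_span:
  fixes D E :: "real^7^7"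
  assumes DE: "D ** E = mat 1" and ED: "E ** D = mat 1"
    and h1: "\<forall>b\<in>B2. D ** b ** E \<in> span B1" and h2: "\<forall>b\<in>B1. E ** b ** D \<in> span B2"
  shows "span B2 = {A. D ** A ** E \<in> span B1}"
proof (intro set_eqI iffI)
  fix A assume "A \<in> span B2"
  then have "D ** A ** E \<in> (\<lambda>X. D ** X ** E) ` span B2" by blast
  also have "\<dots> = span ((\<lambda>X. D ** X ** E) ` B2)" by (rule span_linear_image[OF mm_lin, symmetric])
  also have "\<dots> \<subseteq> span B1" by (rule span_minimal) (use h1 in auto)
  finally show "A \<in> {A. D ** A ** E \<in> span B1}" by simp
next
  fix A assume "A \<in> {A. D ** A ** E \<in> span B1}"
  then have "E ** (D ** A ** E) ** D \<in> (\<lambda>X. E ** X ** D) ` span B1" by blast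
  also have "\<dots> = span ((\<lambda>X. E ** X ** D) ` B1)" by (rule span_linear_image[OF mm_lin, symmetric])
  also have "\<dots> \<subseteq> span B2" by (rule span_minimal) (use h2 in auto)
  also have "E ** (D ** A ** E) ** D = A"
    by (simp add: matrix_mul_assoc ED) (simp add: matrix_mul_assoc[symmetric] ED)
  finally show "A \<in> span B2" .
qed

lemma cb1: "Dm ** Bb1 ** Em = (1) *\<^sub>R Ba1"
  unfolding vec_eq_iff forall_7 Dm_def Em_def dg_conj by (simp add: Bb1_def Ba1_def mkm_e mkm_e0)

lemma ca1: "Em ** Ba1 ** Dm = (1) *\<^sub>R Bb1"
  unfolding vec_eq_iff forall_7 Dm_def Em_def dg_conj by (simp add: Bb1_def Ba1_def mkm_e mkm_e0)

lemma cb2: "Dm ** Bb2 ** Em = (1) *\<^sub>R Ba2"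
  unfolding vec_eq_iff forall_7 Dm_def Em_def dg_conj by (simp add: Bb2_def Ba2_def mkm_e mkm_e0)

lemma ca2: "Em ** Ba2 ** Dm = (1) *\<^sub>R Bb2"
  unfolding vec_eq_iff forall_7 Dm_def Em_def dg_conj by (simp add: Bb2_def Ba2_def mkm_e mkm_e0)

lemma cb3: "Dm ** Bb3 ** Em = (1) *\<^sub>R Ba3"
  unfolding vec_eq_iff forall_7 Dm_def Em_def dg_conj by (simp add: Bb3_def Ba3_def mkm_e mkm_e0)

lemma ca3: "Em ** Ba3 ** Dm = (1) *\<^sub>R Bb3"
  unfolding vec_eq_iff forall_7 Dm_def Em_def dg_conj by (simp add: Bb3_def Ba3_def mkm_e mkm_e0)

lemma cb4: "Dm ** Bb4 ** Em = ((1/3)) *\<^sub>R Ba4"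
  unfolding vec_eq_iff forall_7 Dm_def Em_def dg_conj by (simp add: Bb4_def Ba4_def mkm_e mkm_e0)

lemma ca4: "Em ** Ba4 ** Dm = (3) *\<^sub>R Bb4"
  unfolding vec_eq_iff forall_7 Dm_def Em_def dg_conj by (simp add: Bb4_def Ba4_def mkm_e mkm_e0)

lemma cb5: "Dm ** Bb5 ** Em = ((1/3)) *\<^sub>R Ba5"
  unfolding vec_eq_iff forall_7 Dm_def Em_def dg_conj by (simp add: Bb5_def Ba5_def mkm_e mkm_e0)

lemma ca5: "Em ** Ba5 ** Dm = (3) *\<^sub>R Bb5"
  unfolding vec_eq_iff forall_7 Dm_def Em_def dg_conj by (simp add: Bb5_def Ba5_def mkm_e mkm_e0)

lemma cb6: "Dm ** Bb6 ** Em = ((1/3)) *\<^sub>R Ba6"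
  unfolding vec_eq_iff forall_7 Dm_def Em_def dg_conj by (simp add: Bb6_def Ba6_def mkm_e mkm_e0)

lemma ca6: "Em ** Ba6 ** Dm = (3) *\<^sub>R Bb6"
  unfolding vec_eq_iff forall_7 Dm_def Em_def dg_conj by (simp add: Bb6_def Ba6_def mkm_e mkm_e0)

lemma cb7: "Dm ** Bb7 ** Em = ((1/3)) *\<^sub>R Ba7"
  unfolding vec_eq_iff forall_7 Dm_def Em_def dg_conj by (simp add: Bb7_def Ba7_def mkm_e mkm_e0)

lemma ca7: "Em ** Ba7 ** Dm = (3) *\<^sub>R Bb7"
  unfolding vec_eq_iff forall_7 Dm_def Em_def dg_conj by (simp add: Bb7_def Ba7_def mkm_e mkm_e0)

lemma cb8: "Dm ** Bb8 ** Em = (1) *\<^sub>R Ba8"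
  unfolding vec_eq_iff forall_7 Dm_def Em_def dg_conj by (simp add: Bb8_def Ba8_def mkm_e mkm_e0)

lemma ca8: "Em ** Ba8 ** Dm = (1) *\<^sub>R Bb8"
  unfolding vec_eq_iff forall_7 Dm_def Em_def dg_conj by (simp add: Bb8_def Ba8_def mkm_e mkm_e0)

lemma cb9: "Dm ** Bb9 ** Em = ((1/3)) *\<^sub>R Ba9"
  unfolding vec_eq_iff forall_7 Dm_def Em_def dg_conj by (simp add: Bb9_def Ba9_def mkm_e mkm_e0)

lemma ca9: "Em ** Ba9 ** Dm = (3) *\<^sub>R Bb9"
  unfolding vec_eq_iff forall_7 Dm_def Em_def dg_conj by (simp add: Bb9_def Ba9_def mkm_e mkm_e0)

lemma cb10: "Dm ** Bb10 ** Em = ((1/3)) *\<^sub>R Ba10"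
  unfolding vec_eq_iff forall_7 Dm_def Em_def dg_conj by (simp add: Bb10_def Ba10_def mkm_e mkm_e0)

lemma ca10: "Em ** Ba10 ** Dm = (3) *\<^sub>R Bb10"
  unfolding vec_eq_iff forall_7 Dm_def Em_def dg_conj by (simp add: Bb10_def Ba10_def mkm_e mkm_e0)

lemma cb11: "Dm ** Bb11 ** Em = ((1/3)) *\<^sub>R Ba11"
  unfolding vec_eq_iff forall_7 Dm_def Em_def dg_conj by (simp add: Bb11_def Ba11_def mkm_e mkm_e0)

lemma ca11: "Em ** Ba11 ** Dm = (3) *\<^sub>R Bb11"
  unfolding vec_eq_iff forall_7 Dm_def Em_def dg_conj by (simp add: Bb11_def Ba11_def mkm_e mkm_e0)

lemma cb12: "Dm ** Bb12 ** Em = ((1/3)) *\<^sub>R Ba12"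
  unfolding vec_eq_iff forall_7 Dm_def Em_def dg_conj by (simp add: Bb12_def Ba12_def mkm_e mkm_e0)

lemma ca12: "Em ** Ba12 ** Dm = (3) *\<^sub>R Bb12"
  unfolding vec_eq_iff forall_7 Dm_def Em_def dg_conj by (simp add: Bb12_def Ba12_def mkm_e mkm_e0)

lemma cb13: "Dm ** Bb13 ** Em = (1) *\<^sub>R Ba13"
  unfolding vec_eq_iff forall_7 Dm_def Em_def dg_conj by (simp add: Bb13_def Ba13_def mkm_e mkm_e0)

lemma ca13: "Em ** Ba13 ** Dm = (1) *\<^sub>R Bb13"
  unfolding vec_eq_iff forall_7 Dm_def Em_def dg_conj by (simp add: Bb13_def Ba13_def mkm_e mkm_e0)

lemma cb14: "Dm ** Bb14 ** Em = (1) *\<^sub>R Ba14"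
  unfolding vec_eq_iff forall_7 Dm_def Em_def dg_conj by (simp add: Bb14_def Ba14_def mkm_e mkm_e0)

lemma ca14: "Em ** Ba14 ** Dm = (1) *\<^sub>R Bb14"
  unfolding vec_eq_iff forall_7 Dm_def Em_def dg_conj by (simp add: Bb14_def Ba14_def mkm_e mkm_e0)

lemma stab_beta_conj: "stab 4 beta = {A. Dm ** A ** Em \<in> stab 3 alpha}"
  unfolding stab_beta_eq stab_alpha_eq
proof (rule conj_span[OF DE ED])
  show "\<forall>b\<in>SBb. Dm ** b ** Em \<in> span SBa"
    unfolding SBb_def by (simp add: cb1 cb2 cb3 cb4 cb5 cb6 cb7 cb8 cb9 cb10 cb11 cb12 cb13 cb14 span_scale span_base SBa_def)
  show "\<forall>b\<in>SBa. Em ** b ** Dm \<in> span SBb"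
    unfolding SBa_def by (simp add: ca1 ca2 ca3 ca4 ca5 ca6 ca7 ca8 ca9 ca10 ca11 ca12 ca13 ca14 span_scale span_base SBb_def)
qed

definition Pm :: "real^7^7" where "Pm = mkm [(0,4,3),(1,5,3),(2,6,- 3),(3,0,sqrt 3),(4,1,- sqrt 3),(5,2,- sqrt 3),(6,3,- sqrt 3)]"
definition Qm :: "real^7^7" where "Qm = mkm [(4,0,(1/3)),(5,1,(1/3)),(6,2,- (1/3)),(0,3,(1 / sqrt 3)),(1,4,- (1 / sqrt 3)),(2,5,- (1 / sqrt 3)),(3,6,- (1 / sqrt 3))]"

lemma s3: "sqrt 3 * sqrt 3 = (3::real)" by simp

lemma PQ: "Pm ** Qm = mat 1"
  unfolding vec_eq_iff forall_7 by (simp add: matrix_matrix_mult_def sum_7 Pm_def Qm_def mkm_e mkm_e0 mat_def)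

lemma QP: "Qm ** Pm = mat 1"
  unfolding vec_eq_iff forall_7 by (simp add: matrix_matrix_mult_def sum_7 Pm_def Qm_def mkm_e mkm_e0 mat_def)

lemma alpha_pull: "\<forall>vs. length vs = 3 \<longrightarrow> alpha vs = (1/9) * phi_split (map ((*v) Pm) vs)"
proof (intro allI impI)
  fix vs :: "(real^7) list" assume l: "length vs = 3"
  obtain u v w where vs: "vs = [u,v,w]" using len3[OF l] by blast
  have c: "(Pm *v y)$0 = 3 * y$4" "(Pm *v y)$1 = 3 * y$5" "(Pm *v y)$2 = - 3 * y$6" "(Pm *v y)$3 = sqrt 3 * y$0" "(Pm *v y)$4 = - sqrt 3 * y$1" "(Pm *v y)$5 = - sqrt 3 * y$2" "(Pm *v y)$6 = - sqrt 3 * y$3" for y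
    by (simp_all add: Pm_def mkm_mv mkm_mv0)
  have e: "phi_split [Pm *v u, Pm *v v, Pm *v w] - 9 * alpha [u,v,w] = (sqrt 3 * sqrt 3 - 3) * (3 * (u$0 * v$1 * w$4) + 3 * (u$0 * v$2 * w$5) + 3 * (u$0 * v$3 * w$6) - 3 * (u$0 * v$4 * w$1) - 3 * (u$0 * v$5 * w$2) - 3 * (u$0 * v$6 * w$3) - 3 * (u$1 * v$0 * w$4) - 3 * (u$1 * v$2 * w$6) + 3 * (u$1 * v$3 * w$5) + 3 * (u$1 * v$4 * w$0) - 3 * (u$1 * v$5 * w$3) + 3 * (u$1 * v$6 * w$2) - 3 * (u$2 * v$0 * w$5) + 3 * (u$2 * v$1 * w$6) - 3 * (u$2 * v$3 * w$4) + 3 * (u$2 * v$4 * w$3) + 3 * (u$2 * v$5 * w$0) - 3 * (u$2 * v$6 * w$1) - 3 * (u$3 * v$0 * w$6) - 3 * (u$3 * v$1 * w$5) + 3 * (u$3 * v$2 * w$4) - 3 * (u$3 * v$4 * w$2) + 3 * (u$3 * v$5 * w$1) + 3 * (u$3 * v$6 * w$0) + 3 * (u$4 * v$0 * w$1) - 3 * (u$4 * v$1 * w$0) - 3 * (u$4 * v$2 * w$3) + 3 * (u$4 * v$3 * w$2) + 3 * (u$5 * v$0 * w$2) + 3 * (u$5 * v$1 * w$3) - 3 * (u$5 * v$2 * w$0) - 3 * (u$5 * v$3 * w$1) + 3 * (u$6 * v$0 * w$3) - 3 * (u$6 * v$1 * w$2) + 3 * (u$6 * v$2 * w$1) - 3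 * (u$6 * v$3 * w$0))"
    unfolding alpha3 phi3 c by algebra
  have e2: "phi_split [Pm *v u, Pm *v v, Pm *v w] - 9 * alpha [u,v,w] = 0" using e s3 by simp
  show "alpha vs = (1/9) * phi_split (map ((*v) Pm) vs)"
    unfolding vs list.map using e2 by linarith
qed

lemma stab_alpha_g2: "stab 3 alpha = {A. Pm ** A ** Qm \<in> g2_split}"
  unfolding g2_split_def by (rule pullback[OF alpha_pull _ PQ QP]) simp

definition Gm1 :: "real^7^7" where "Gm1 = mkm [(0,1,-1),(1,0,1),(2,3,-1),(3,2,1)]"
lemma gen1: "so_of (\<lambda>vs. ef [1,2] vs + ef [3,4] vs) = Gm1"
  unfolding vec_eq_iff forall_7 by (simp add: so_of_def ef2 idxv idx_def axis_c Gm1_def mkm_e mkm_e0)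

definition Gm2 :: "real^7^7" where "Gm2 = mkm [(0,2,-1),(1,3,1),(2,0,1),(3,1,-1)]"
lemma gen2: "so_of (\<lambda>vs. ef [1,3] vs + ef [4,2] vs) = Gm2"
  unfolding vec_eq_iff forall_7 by (simp add: so_of_def ef2 idxv idx_def axis_c Gm2_def mkm_e mkm_e0)

definition Gm3 :: "real^7^7" where "Gm3 = mkm [(0,3,-1),(1,2,-1),(2,1,1),(3,0,1)]"
lemma gen3: "so_of (\<lambda>vs. ef [1,4] vs + ef [2,3] vs) = Gm3"
  unfolding vec_eq_iff forall_7 by (simp add: so_of_def ef2 idxv idx_def axis_c Gm3_def mkm_e mkm_e0)

definition Gm4 :: "real^7^7" where "Gm4 = mkm [(0,1,-1),(1,0,1),(2,3,1),(3,2,-1),(5,6,2),(6,5,-2)]"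
lemma gen4: "so_of (\<lambda>vs. ef [1,2] vs - ef [3,4] vs - 2 * ef [6,7] vs) = Gm4"
  unfolding vec_eq_iff forall_7 by (simp add: so_of_def ef2 idxv idx_def axis_c Gm4_def mkm_e mkm_e0)

definition Gm5 :: "real^7^7" where "Gm5 = mkm [(0,2,-1),(1,3,-1),(2,0,1),(3,1,1),(4,6,-2),(6,4,2)]"
lemma gen5: "so_of (\<lambda>vs. ef [1,3] vs - ef [4,2] vs - 2 * ef [7,5] vs) = Gm5"
  unfolding vec_eq_iff forall_7 by (simp add: so_of_def ef2 idxv idx_def axis_c Gm5_def mkm_e mkm_e0)

definition Gm6 :: "real^7^7" where "Gm6 = mkm [(0,3,-1),(1,2,1),(2,1,-1),(3,0,1),(4,5,2),(5,4,-2)]"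
lemma gen6: "so_of (\<lambda>vs. ef [1,4] vs - ef [2,3] vs - 2 * ef [5,6] vs) = Gm6"
  unfolding vec_eq_iff forall_7 by (simp add: so_of_def ef2 idxv idx_def axis_c Gm6_def mkm_e mkm_e0)

lemma so4_gens_eq: "so4_gens = {Gm1, Gm2, Gm3, Gm4, Gm5, Gm6}"
  unfolding so4_gens_def gen1 gen2 gen3 gen4 gen5 gen6 by (rule refl)

lemma Gm1_Ba: "Gm1 \<in> span SBa"
proof -
  have e: "Gm1 = (1) *\<^sub>R Ba3"
    unfolding vec_eq_iff forall_7 by (simp add: Gm1_def Ba_defs mkm_e mkm_e0)
  have "(1) *\<^sub>R Ba3 \<in> span SBa"
    by (intro span_add span_scale span_base) (simp_all add: SBa_def)
  then show ?thesis using e by simp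
qed

lemma Gm1_Bb: "Gm1 \<in> span SBb"
proof -
  have e: "Gm1 = (1) *\<^sub>R Bb3"
    unfolding vec_eq_iff forall_7 by (simp add: Gm1_def Bb_defs mkm_e mkm_e0)
  have "(1) *\<^sub>R Bb3 \<in> span SBb"
    by (intro span_add span_scale span_base) (simp_all add: SBb_def)
  then show ?thesis using e by simp
qed

lemma Gm2_Ba: "Gm2 \<in> span SBa"
proof -
  have e: "Gm2 = (- 1) *\<^sub>R Ba2"
    unfolding vec_eq_iff forall_7 by (simp add: Gm2_def Ba_defs mkm_e mkm_e0)
  have "(- 1) *\<^sub>R Ba2 \<in> span SBa"
    by (intro span_add span_scale span_base) (simp_all add: SBa_def)
  then show ?thesis using e by simp
qed

lemma Gm2_Bb: "Gm2 \<in> span SBb"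
proof -
  have e: "Gm2 = (- 1) *\<^sub>R Bb2"
    unfolding vec_eq_iff forall_7 by (simp add: Gm2_def Bb_defs mkm_e mkm_e0)
  have "(- 1) *\<^sub>R Bb2 \<in> span SBb"
    by (intro span_add span_scale span_base) (simp_all add: SBb_def)
  then show ?thesis using e by simp
qed

lemma Gm3_Ba: "Gm3 \<in> span SBa"
proof -
  have e: "Gm3 = (1) *\<^sub>R Ba1"
    unfolding vec_eq_iff forall_7 by (simp add: Gm3_def Ba_defs mkm_e mkm_e0)
  have "(1) *\<^sub>R Ba1 \<in> span SBa"
    by (intro span_add span_scale span_base) (simp_all add: SBa_def)
  then show ?thesis using e by simp
qed

lemma Gm3_Bb: "Gm3 \<in> span SBb"
proof -
  have e: "Gm3 = (1) *\<^sub>R Bb1"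
    unfolding vec_eq_iff forall_7 by (simp add: Gm3_def Bb_defs mkm_e mkm_e0)
  have "(1) *\<^sub>R Bb1 \<in> span SBb"
    by (intro span_add span_scale span_base) (simp_all add: SBb_def)
  then show ?thesis using e by simp
qed

lemma Gm4_Ba: "Gm4 \<in> span SBa"
proof -
  have e: "Gm4 = (- 1) *\<^sub>R Ba3 + (- 2) *\<^sub>R Ba14"
    unfolding vec_eq_iff forall_7 by (simp add: Gm4_def Ba_defs mkm_e mkm_e0)
  have "(- 1) *\<^sub>R Ba3 + (- 2) *\<^sub>R Ba14 \<in> span SBa"
    by (intro span_add span_scale span_base) (simp_all add: SBa_def)
  then show ?thesis using e by simp
qed

lemma Gm4_Bb: "Gm4 \<in> span SBb"
proof -
  have e: "Gm4 = (- 1) *\<^sub>R Bb3 + (- 2) *\<^sub>R Bb14"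
    unfolding vec_eq_iff forall_7 by (simp add: Gm4_def Bb_defs mkm_e mkm_e0)
  have "(- 1) *\<^sub>R Bb3 + (- 2) *\<^sub>R Bb14 \<in> span SBb"
    by (intro span_add span_scale span_base) (simp_all add: SBb_def)
  then show ?thesis using e by simp
qed

lemma Gm5_Ba: "Gm5 \<in> span SBa"
proof -
  have e: "Gm5 = (1) *\<^sub>R Ba2 + (2) *\<^sub>R Ba13"
    unfolding vec_eq_iff forall_7 by (simp add: Gm5_def Ba_defs mkm_e mkm_e0)
  have "(1) *\<^sub>R Ba2 + (2) *\<^sub>R Ba13 \<in> span SBa"
    by (intro span_add span_scale span_base) (simp_all add: SBa_def)
  then show ?thesis using e by simp
qed

lemma Gm5_Bb: "Gm5 \<in> span SBb"
proof -
  have e: "Gm5 = (1) *\<^sub>R Bb2 + (2) *\<^sub>R Bb13"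
    unfolding vec_eq_iff forall_7 by (simp add: Gm5_def Bb_defs mkm_e mkm_e0)
  have "(1) *\<^sub>R Bb2 + (2) *\<^sub>R Bb13 \<in> span SBb"
    by (intro span_add span_scale span_base) (simp_all add: SBb_def)
  then show ?thesis using e by simp
qed

lemma Gm6_Ba: "Gm6 \<in> span SBa"
proof -
  have e: "Gm6 = (1) *\<^sub>R Ba1 + (- 2) *\<^sub>R Ba8"
    unfolding vec_eq_iff forall_7 by (simp add: Gm6_def Ba_defs mkm_e mkm_e0)
  have "(1) *\<^sub>R Ba1 + (- 2) *\<^sub>R Ba8 \<in> span SBa"
    by (intro span_add span_scale span_base) (simp_all add: SBa_def)
  then show ?thesis using e by simp
qed

lemma Gm6_Bb: "Gm6 \<in> span SBb"
proof -
  have e: "Gm6 = (1) *\<^sub>R Bb1 + (- 2) *\<^sub>R Bb8"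
    unfolding vec_eq_iff forall_7 by (simp add: Gm6_def Bb_defs mkm_e mkm_e0)
  have "(1) *\<^sub>R Bb1 + (- 2) *\<^sub>R Bb8 \<in> span SBb"
    by (intro span_add span_scale span_base) (simp_all add: SBb_def)
  then show ?thesis using e by simp
qed

lemma S_solved:
  assumes h1: "A \<in> stab 3 alpha" and h2: "A \<in> stab 4 beta"
  shows "A$0$0 = 0"
    "A$0$1 = - A$1$0"
    "A$0$2 = - A$2$0"
    "A$0$3 = - A$3$0"
    "A$0$4 = 0"
    "A$0$5 = 0"
    "A$0$6 = 0"
    "A$1$1 = 0"
    "A$1$2 = - A$2$1"
    "A$1$3 = - A$3$1"
    "A$1$4 = 0"
    "A$1$5 = 0"
    "A$1$6 = 0"
    "A$2$2 = 0"
    "A$2$3 = - A$3$2"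
    "A$2$4 = 0"
    "A$2$5 = 0"
    "A$2$6 = 0"
    "A$3$3 = 0"
    "A$3$4 = 0"
    "A$3$5 = 0"
    "A$3$6 = 0"
    "A$4$0 = 0"
    "A$4$1 = 0"
    "A$4$2 = 0"
    "A$4$3 = 0"
    "A$4$4 = 0"
    "A$4$5 = - A$2$1 + A$3$0"
    "A$4$6 = - A$2$0 - A$3$1"
    "A$5$0 = 0"
    "A$5$1 = 0"
    "A$5$2 = 0"
    "A$5$3 = 0"
    "A$5$4 = A$2$1 - A$3$0"
    "A$5$5 = 0"
    "A$5$6 = A$1$0 - A$3$2"
    "A$6$0 = 0"
    "A$6$1 = 0"
    "A$6$2 = 0"
    "A$6$3 = 0"
    "A$6$4 = A$2$0 + A$3$1"
    "A$6$5 = - A$1$0 + A$3$2"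
    "A$6$6 = 0"
proof -
  show "A$0$0 = 0" using alpha_raw(3)[OF h1] alpha_raw(8)[OF h1] alpha_raw(12)[OF h1] alpha_raw(19)[OF h1] alpha_raw(21)[OF h1] alpha_raw(26)[OF h1] alpha_raw(35)[OF h1] by linarith
  show "A$0$1 = - A$1$0" using alpha_raw(9)[OF h1] alpha_raw(11)[OF h1] alpha_raw(18)[OF h1] alpha_raw(22)[OF h1] by linarith
  show "A$0$2 = - A$2$0" using alpha_raw(5)[OF h1] alpha_raw(10)[OF h1] alpha_raw(17)[OF h1] alpha_raw(28)[OF h1] by linarith
  show "A$0$3 = - A$3$0" using alpha_raw(4)[OF h1] alpha_raw(7)[OF h1] alpha_raw(20)[OF h1] alpha_raw(27)[OF h1] by linarith
  show "A$0$4 = 0" using alpha_raw(6)[OF h1] alpha_raw(15)[OF h1] alpha_raw(29)[OF h1] alpha_raw(33)[OF h1] beta_raw(3)[OF h2] beta_raw(7)[OF h2] by linarith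
  show "A$0$5 = 0" using alpha_raw(2)[OF h1] alpha_raw(14)[OF h1] alpha_raw(23)[OF h1] alpha_raw(34)[OF h1] beta_raw(2)[OF h2] beta_raw(13)[OF h2] by linarith
  show "A$0$6 = 0" using alpha_raw(1)[OF h1] alpha_raw(13)[OF h1] alpha_raw(24)[OF h1] alpha_raw(31)[OF h1] beta_raw(5)[OF h2] beta_raw(12)[OF h2] by linarith
  show "A$1$1 = 0" using alpha_raw(3)[OF h1] alpha_raw(8)[OF h1] alpha_raw(12)[OF h1] alpha_raw(19)[OF h1] alpha_raw(21)[OF h1] alpha_raw(26)[OF h1] alpha_raw(35)[OF h1] by linarith
  show "A$1$2 = - A$2$1" using alpha_raw(4)[OF h1] alpha_raw(7)[OF h1] alpha_raw(20)[OF h1] alpha_raw(27)[OF h1] by linarith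
  show "A$1$3 = - A$3$1" using alpha_raw(5)[OF h1] alpha_raw(10)[OF h1] alpha_raw(17)[OF h1] alpha_raw(28)[OF h1] by linarith
  show "A$1$4 = 0" using alpha_raw(16)[OF h1] alpha_raw(25)[OF h1] alpha_raw(30)[OF h1] alpha_raw(32)[OF h1] beta_raw(4)[OF h2] beta_raw(6)[OF h2] by linarith
  show "A$1$5 = 0" using alpha_raw(1)[OF h1] alpha_raw(13)[OF h1] alpha_raw(24)[OF h1] alpha_raw(31)[OF h1] beta_raw(12)[OF h2] by linarith
  show "A$1$6 = 0" using alpha_raw(2)[OF h1] alpha_raw(14)[OF h1] alpha_raw(23)[OF h1] alpha_raw(34)[OF h1] beta_raw(13)[OF h2] by linarith
  show "A$2$2 = 0" using alpha_raw(3)[OF h1] alpha_raw(8)[OF h1] alpha_raw(12)[OF h1] alpha_raw(19)[OF h1] alpha_raw(21)[OF h1] alpha_raw(26)[OF h1] alpha_raw(35)[OF h1] by linarith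
  show "A$2$3 = - A$3$2" using alpha_raw(9)[OF h1] alpha_raw(11)[OF h1] alpha_raw(18)[OF h1] alpha_raw(22)[OF h1] by linarith
  show "A$2$4 = 0" using alpha_raw(1)[OF h1] alpha_raw(13)[OF h1] alpha_raw(24)[OF h1] alpha_raw(31)[OF h1] beta_raw(5)[OF h2] by linarith
  show "A$2$5 = 0" using alpha_raw(16)[OF h1] alpha_raw(25)[OF h1] alpha_raw(30)[OF h1] alpha_raw(32)[OF h1] beta_raw(6)[OF h2] by linarith
  show "A$2$6 = 0" using alpha_raw(6)[OF h1] alpha_raw(15)[OF h1] alpha_raw(29)[OF h1] alpha_raw(33)[OF h1] beta_raw(7)[OF h2] by linarith
  show "A$3$3 = 0" using alpha_raw(3)[OF h1] alpha_raw(8)[OF h1] alpha_raw(12)[OF h1] alpha_raw(19)[OF h1] alpha_raw(21)[OF h1] alpha_raw(26)[OF h1] alpha_raw(35)[OF h1] by linarith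
  show "A$3$4 = 0" using alpha_raw(2)[OF h1] alpha_raw(14)[OF h1] alpha_raw(23)[OF h1] alpha_raw(34)[OF h1] beta_raw(2)[OF h2] by linarith
  show "A$3$5 = 0" using alpha_raw(6)[OF h1] alpha_raw(15)[OF h1] alpha_raw(29)[OF h1] alpha_raw(33)[OF h1] beta_raw(3)[OF h2] by linarith
  show "A$3$6 = 0" using alpha_raw(16)[OF h1] alpha_raw(25)[OF h1] alpha_raw(30)[OF h1] alpha_raw(32)[OF h1] beta_raw(4)[OF h2] by linarith
  show "A$4$0 = 0" using alpha_raw(6)[OF h1] alpha_raw(15)[OF h1] beta_raw(3)[OF h2] beta_raw(7)[OF h2] by linarith
  show "A$4$1 = 0" using alpha_raw(16)[OF h1] alpha_raw(25)[OF h1] beta_raw(4)[OF h2] beta_raw(6)[OF h2] by linarith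
  show "A$4$2 = 0" using alpha_raw(1)[OF h1] alpha_raw(13)[OF h1] alpha_raw(24)[OF h1] alpha_raw(31)[OF h1] beta_raw(5)[OF h2] by linarith
  show "A$4$3 = 0" using alpha_raw(2)[OF h1] alpha_raw(14)[OF h1] alpha_raw(23)[OF h1] alpha_raw(34)[OF h1] beta_raw(2)[OF h2] by linarith
  show "A$4$4 = 0" using alpha_raw(3)[OF h1] alpha_raw(8)[OF h1] alpha_raw(12)[OF h1] alpha_raw(19)[OF h1] alpha_raw(21)[OF h1] alpha_raw(26)[OF h1] alpha_raw(35)[OF h1] by linarith
  show "A$4$5 = - A$2$1 + A$3$0" using alpha_raw(4)[OF h1] by linarith
  show "A$4$6 = - A$2$0 - A$3$1" using alpha_raw(5)[OF h1] by linarith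
  show "A$5$0 = 0" using alpha_raw(2)[OF h1] alpha_raw(14)[OF h1] beta_raw(2)[OF h2] beta_raw(13)[OF h2] by linarith
  show "A$5$1 = 0" using alpha_raw(1)[OF h1] alpha_raw(13)[OF h1] alpha_raw(24)[OF h1] alpha_raw(31)[OF h1] beta_raw(12)[OF h2] by linarith
  show "A$5$2 = 0" using alpha_raw(16)[OF h1] alpha_raw(25)[OF h1] alpha_raw(30)[OF h1] alpha_raw(32)[OF h1] beta_raw(6)[OF h2] by linarith
  show "A$5$3 = 0" using alpha_raw(6)[OF h1] alpha_raw(15)[OF h1] alpha_raw(29)[OF h1] alpha_raw(33)[OF h1] beta_raw(3)[OF h2] by linarith
  show "A$5$4 = A$2$1 - A$3$0" using alpha_raw(4)[OF h1] alpha_raw(7)[OF h1] alpha_raw(20)[OF h1] alpha_raw(27)[OF h1] by linarith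
  show "A$5$5 = 0" using alpha_raw(3)[OF h1] alpha_raw(8)[OF h1] alpha_raw(12)[OF h1] alpha_raw(19)[OF h1] alpha_raw(21)[OF h1] alpha_raw(26)[OF h1] alpha_raw(35)[OF h1] by linarith
  show "A$5$6 = A$1$0 - A$3$2" using alpha_raw(9)[OF h1] by linarith
  show "A$6$0 = 0" using alpha_raw(1)[OF h1] alpha_raw(13)[OF h1] beta_raw(5)[OF h2] beta_raw(12)[OF h2] by linarith
  show "A$6$1 = 0" using alpha_raw(2)[OF h1] alpha_raw(14)[OF h1] alpha_raw(23)[OF h1] alpha_raw(34)[OF h1] beta_raw(13)[OF h2] by linarith
  show "A$6$2 = 0" using alpha_raw(6)[OF h1] alpha_raw(15)[OF h1] alpha_raw(29)[OF h1] alpha_raw(33)[OF h1] beta_raw(7)[OF h2] by linarith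
  show "A$6$3 = 0" using alpha_raw(16)[OF h1] alpha_raw(25)[OF h1] alpha_raw(30)[OF h1] alpha_raw(32)[OF h1] beta_raw(4)[OF h2] by linarith
  show "A$6$4 = A$2$0 + A$3$1" using alpha_raw(5)[OF h1] alpha_raw(10)[OF h1] alpha_raw(17)[OF h1] alpha_raw(28)[OF h1] by linarith
  show "A$6$5 = - A$1$0 + A$3$2" using alpha_raw(9)[OF h1] alpha_raw(11)[OF h1] alpha_raw(18)[OF h1] alpha_raw(22)[OF h1] by linarith
  show "A$6$6 = 0" using alpha_raw(3)[OF h1] alpha_raw(8)[OF h1] alpha_raw(12)[OF h1] alpha_raw(19)[OF h1] alpha_raw(21)[OF h1] alpha_raw(26)[OF h1] alpha_raw(35)[OF h1] by linarith
qed

lemma inter_eq: "stab 3 alpha \<inter> stab 4 beta = span so4_gens"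
proof
  show "stab 3 alpha \<inter> stab 4 beta \<subseteq> span so4_gens"
  proof
    fix A assume h: "A \<in> stab 3 alpha \<inter> stab 4 beta"
    then have h1: "A \<in> stab 3 alpha" and h2: "A \<in> stab 4 beta" by auto
    note s = S_solved[OF h1 h2]
    have e: "A = ((1/2) * A$1$0 + (1/2) * A$3$2) *\<^sub>R Gm1 + ((1/2) * A$2$0 - (1/2) * A$3$1) *\<^sub>R Gm2 + ((1/2) * A$3$0 + (1/2) * A$2$1) *\<^sub>R Gm3 + ((1/2) * A$1$0 - (1/2) * A$3$2) *\<^sub>R Gm4 + ((1/2) * A$2$0 + (1/2) * A$3$1) *\<^sub>R Gm5 + ((1/2) * A$3$0 - (1/2) * A$2$1) *\<^sub>R Gm6"
      unfolding vec_eq_iff forall_7 by (simp add: Gm1_def Gm2_def Gm3_def Gm4_def Gm5_def Gm6_def mkm_e mkm_e0 s)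
    have "((1/2) * A$1$0 + (1/2) * A$3$2) *\<^sub>R Gm1 + ((1/2) * A$2$0 - (1/2) * A$3$1) *\<^sub>R Gm2 + ((1/2) * A$3$0 + (1/2) * A$2$1) *\<^sub>R Gm3 + ((1/2) * A$1$0 - (1/2) * A$3$2) *\<^sub>R Gm4 + ((1/2) * A$2$0 + (1/2) * A$3$1) *\<^sub>R Gm5 + ((1/2) * A$3$0 - (1/2) * A$2$1) *\<^sub>R Gm6 \<in> span so4_gens"
      by (intro span_add span_scale span_base) (simp_all add: so4_gens_eq)
    then show "A \<in> span so4_gens" using e by simp
  qed
  have sub: "subspace (stab 3 alpha \<inter> stab 4 beta)"
    by (intro subspace_inter stab_subspace ml_alpha ml_beta)
  show "span so4_gens \<subseteq> stab 3 alpha \<inter> stab 4 beta"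
    by (rule span_minimal[OF _ sub])
       (simp add: so4_gens_eq stab_alpha_eq stab_beta_eq Gm1_Ba Gm2_Ba Gm3_Ba Gm4_Ba Gm5_Ba Gm6_Ba Gm1_Bb Gm2_Bb Gm3_Bb Gm4_Bb Gm5_Bb Gm6_Bb)
qed


definition emb :: "4 \<Rightarrow> 7" where "emb i = (if i = 1 then 0 else if i = 2 then 1 else if i = 3 then 2 else 3)"

lemma embv: "emb 1 = 0" "emb 2 = 1" "emb 3 = 2" "emb 4 = 3"
  by (simp_all add: emb_def)

definition rf :: "real^7^7 \<Rightarrow> real^4^4" where "rf X = (\<chi> i j. X $ emb i $ emb j)"

lemma rf_c: "rf X $ i $ j = X $ emb i $ emb j" by (simp add: rf_def)

lemma rf_lin: "linear rf" by (rule linearI) (simp_all add: rf_def vec_eq_iff)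

lemma sum_4: "sum f (UNIV::4 set) = f 1 + f 2 + f 3 + f 4"
  unfolding UNIV_4 by (simp add: ac_simps)

lemma rf_inj: "inj_on rf (stab 3 alpha \<inter> stab 4 beta)"
proof (rule inj_onI)
  fix X Y assume hX: "X \<in> stab 3 alpha \<inter> stab 4 beta" and hY: "Y \<in> stab 3 alpha \<inter> stab 4 beta"
    and e: "rf X = rf Y"
  note sX = S_solved[OF IntD1[OF hX] IntD2[OF hX]]
  note sY = S_solved[OF IntD1[OF hY] IntD2[OF hY]]
  have f1: "X$1$0 = Y$1$0" using arg_cong[OF e, of "\<lambda>M. M $ 2 $ 1"] by (simp add: rf_c embv)
  have f2: "X$2$0 = Y$2$0" using arg_cong[OF e, of "\<lambda>M. M $ 3 $ 1"] by (simp add: rf_c embv)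
  have f3: "X$3$0 = Y$3$0" using arg_cong[OF e, of "\<lambda>M. M $ 4 $ 1"] by (simp add: rf_c embv)
  have f4: "X$2$1 = Y$2$1" using arg_cong[OF e, of "\<lambda>M. M $ 3 $ 2"] by (simp add: rf_c embv)
  have f5: "X$3$1 = Y$3$1" using arg_cong[OF e, of "\<lambda>M. M $ 4 $ 2"] by (simp add: rf_c embv)
  have f6: "X$3$2 = Y$3$2" using arg_cong[OF e, of "\<lambda>M. M $ 4 $ 3"] by (simp add: rf_c embv)
  show "X = Y" unfolding vec_eq_iff forall_7 by (simp add: sX sY f1 f2 f3 f4 f5 f6)
qed

lemma rf_img: "rf ` (stab 3 alpha \<inter> stab 4 beta) = so4"
proof
  show "rf ` (stab 3 alpha \<inter> stab 4 beta) \<subseteq> so4"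
  proof
    fix Z assume "Z \<in> rf ` (stab 3 alpha \<inter> stab 4 beta)"
    then obtain X where hX: "X \<in> stab 3 alpha \<inter> stab 4 beta" and Z: "Z = rf X" by blast
    note sX = S_solved[OF IntD1[OF hX] IntD2[OF hX]]
    show "Z \<in> so4" unfolding so4_def mem_Collect_eq Z vec_eq_iff forall_4
      by (simp add: transpose_def rf_c embv sX)
  qed
  show "so4 \<subseteq> rf ` (stab 3 alpha \<inter> stab 4 beta)"
  proof
    fix M assume hM: "M \<in> so4"
    have tr: "transpose M = - M" using hM by (simp add: so4_def)
    have sk: "M $ j $ i = - M $ i $ j" for i j
    proof -
      have "transpose M $ i $ j = (- M) $ i $ j" by (simp add: tr)
      then show ?thesis by (simp add: transpose_def)
    qed
    have u: "M$1$2 = - M$2$1" "M$1$3 = - M$3$1" "M$1$4 = - M$4$1" "M$2$3 = - M$3$2" "M$2$4 = - M$4$2" "M$3$4 = - M$4$3"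
      using sk[of 2 1] sk[of 3 1] sk[of 4 1] sk[of 3 2] sk[of 4 2] sk[of 4 3] by simp_all
    have dgl: "M$1$1 = 0" "M$2$2 = 0" "M$3$3 = 0" "M$4$4 = 0"
      using sk[of 1 1] sk[of 2 2] sk[of 3 3] sk[of 4 4] by simp_all
    define X where "X = ((1/2) * M$2$1 + (1/2) * M$4$3) *\<^sub>R Gm1 + ((1/2) * M$3$1 - (1/2) * M$4$2) *\<^sub>R Gm2 + ((1/2) * M$4$1 + (1/2) * M$3$2) *\<^sub>R Gm3 + ((1/2) * M$2$1 - (1/2) * M$4$3) *\<^sub>R Gm4 + ((1/2) * M$3$1 + (1/2) * M$4$2) *\<^sub>R Gm5 + ((1/2) * M$4$1 - (1/2) * M$3$2) *\<^sub>R Gm6"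
    have "X \<in> span so4_gens" unfolding X_def
      by (intro span_add span_scale span_base) (simp_all add: so4_gens_eq)
    then have hX: "X \<in> stab 3 alpha \<inter> stab 4 beta" by (simp add: inter_eq)
    have "rf X = M" unfolding vec_eq_iff forall_4
      by (simp add: X_def rf_c embv Gm1_def Gm2_def Gm3_def Gm4_def Gm5_def Gm6_def mkm_e mkm_e0 u dgl)
    then show "M \<in> rf ` (stab 3 alpha \<inter> stab 4 beta)" using hX by blast
  qed
qed

lemma rf_br:
  assumes hX: "X \<in> stab 3 alpha \<inter> stab 4 beta" and hY: "Y \<in> stab 3 alpha \<inter> stab 4 beta"
  shows "rf (lie_br X Y) = lie_br (rf X) (rf Y)"
proof -
  note sX = S_solved[OF IntD1[OF hX] IntD2[OF hX]]
  note sY = S_solved[OF IntD1[OF hY] IntD2[OF hY]]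
  show ?thesis unfolding lie_br_def vec_eq_iff forall_4
    by (simp add: rf_c embv matrix_matrix_mult_def sum_7 sum_4 sX sY algebra_simps)
qed

lemma so4_iso: "lie_iso (stab 3 alpha \<inter> stab 4 beta) so4"
proof -
  have "bij_betw rf (stab 3 alpha \<inter> stab 4 beta) so4"
    unfolding bij_betw_def using rf_inj rf_img by blast
  then show ?thesis unfolding lie_iso_def using rf_lin rf_br by blast
qed

theorem lemma2p1:
  shows "lie_subalgebra (stab 3 alpha) \<and> lie_subalgebra (stab 4 beta)
       \<and> stab 3 alpha \<noteq> stab 4 beta
       \<and> lie_iso (stab 3 alpha) g2_split \<and> lie_iso (stab 4 beta) g2_split
       \<and> stab 3 alpha \<inter> stab 4 beta = span so4_gens
       \<and> lie_iso (stab 3 alpha \<inter> stab 4 beta) so4"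
proof -
  have la: "lie_subalgebra (stab 3 alpha)" by (rule stab_lie[OF ml_alpha])
  have lb: "lie_subalgebra (stab 4 beta)" by (rule stab_lie[OF ml_beta])
  have nb: "Ba4 \<notin> stab 4 beta"
  proof
    assume "Ba4 \<in> stab 4 beta"
    from beta_raw(2)[OF this] show False by (simp add: Ba4_def mkm_e mkm_e0)
  qed
  have ne: "stab 3 alpha \<noteq> stab 4 beta" using Ba4_in nb by blast
  have ia: "lie_iso (stab 3 alpha) g2_split" by (rule conj_iso[OF stab_alpha_g2 PQ QP])
  have eqb: "stab 4 beta = {A. (Pm ** Dm) ** A ** (Em ** Qm) \<in> g2_split}"
    unfolding stab_beta_conj stab_alpha_g2 by (simp add: matrix_mul_assoc)
  have PDEQ: "(Pm ** Dm) ** (Em ** Qm) = mat 1"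
    by (metis DE PQ matrix_mul_assoc matrix_mul_rid)
  have EQPD: "(Em ** Qm) ** (Pm ** Dm) = mat 1"
    by (metis ED QP matrix_mul_assoc matrix_mul_rid)
  have ib: "lie_iso (stab 4 beta) g2_split" by (rule conj_iso[OF eqb PDEQ EQPD])
  show ?thesis using la lb ne ia ib inter_eq so4_iso by blast
qed

end
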